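(* Let $T$ and $S$ be bounded, linear, positive operators on $L^2(G,\mathbb{C}^{s\times r})$ that are adjointable with respect to the matrix-valued inner product, and let $\{E_k\}_{k\in\mathbb{N}}$ be a matrix-valued orthonormal basis for $L^2(G,\mathbb{C}^{s\times r})$. Let $I$ be the identity operator. Then: (1) $\{(I+T)E_k\}_{k\in\mathbb{N}}$ and $\{(I+S)E_k\}_{k\in\mathbb{N}}$ are matrix-valued Riesz bases for $L^2(G,\mathbb{C}^{s\times r})$; (2) $\{(I+T+S)E_k\}_{k\in\mathbb{N}}$ is a matrix-valued Riesz basis for $L^2(G,\mathbb{C}^{s\times r})$; (3) if $TS=ST$, then $\{(I+TS)E_k\}_{k\in\mathbb{N}}$ is a matrix-valued Riesz basis for $L^2(G,\mathbb{C}^{s\times r})$.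
   Context: $G$ is a locally compact abelian group that is metrizable and $\sigma$-compact, with Haar measure $\mu_G$; $s,r\in\mathbb{N}$. $L^2(G,\mathbb{C}^{s\times r})$ is the space of $s\times r$ matrices $\mathbf{f}=[f_{ij}]$ with all entries in $L^2(G)$. The matrix-valued inner product is $\langle \mathbf{f},\mathbf{g}\rangle=\int_G \mathbf{f}(x)\mathbf{g}^*(x)\,d\mu_G\in M_s(\mathbb{C})$ (entrywise integral). $L^2(G,\mathbb{C}^{s\times r})$ is a Hilbert space with inner product $\langle \mathbf{f},\mathbf{g}\rangle_{L^2}=\mathrm{tr}\langle \mathbf{f},\mathbf{g}\rangle$ and Frobenius norm $\|\mathbf{f}\|=(\sum_{i,j}\int_G|f_{ij}|^2d\mu_G)^{1/2}$; $U^*$ denotes the Hilbert-adjoint of a bounded operator $U$ with respect to this inner product. $U$ is adjointable with respect to the matrix-valued inner product if $\langle U\mathbf{f},\mathbf{g}\rangle=\langle\mathbf{f},U^*\mathbf{g}\rangle$ for all $\mathbf{f},\mathbf{g}$. A bounded operator $T$ is positive if it is self-adjoint ($T^*=T$) and $\mathrm{tr}\langle T\mathbf{f},\mathbf{f}\rangle\ge0$ for all $\mathbf{f}$. A matrix-valued orthonormal basis is a sequence $\{E_k\}_{k\in\mathbb{N}}\subset L^2(G,\mathbb{C}^{s\times r})$ with $\langle E_k,E_j\rangle=\mathbf{I}_{s\times s}$ if $k=j$ and $\mathbf{O}_{s\times s}$ if $k\neq j$, such that every $\mathbf{f}$ satisfies $\mathbf{f}=\sum_k\langle\mathbf{f},E_k\rangle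 E_k$ with convergence in the Frobenius norm. A matrix-valued Riesz basis is a family of the form $\{UE_k\}_{k\in\mathbb{N}}$ where $\{E_k\}$ is a matrix-valued orthonormal basis and $U$ is a bounded, linear, bijective operator on $L^2(G,\mathbb{C}^{s\times r})$ that is adjointable with respect to the matrix-valued inner product. *)

theory Defs
  imports "HOL-Analysis.Analysis"
begin

definition lca_group :: "'g::{ab_group_add, metric_space} itself \<Rightarrow> bool" where
  "lca_group _ \<longleftrightarrow>
     continuous_on UNIV (\<lambda>p::'g \<times> 'g. fst p + snd p) \<and>
     continuous_on UNIV (\<lambda>x::'g. - x) \<and>
     locally_compact_space (euclidean :: 'g topology) \<and>
     (\<exists>K::nat \<Rightarrow> 'g set. (\<forall>n. compact (K n)) \<and> (\<Union>n. K n) = UNIV)"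

text \<open>A Haar measure on G: a Borel measure, translation invariant, finite on compact
  sets and positive on nonempty open sets (regularity is automatic on a metrizable
  sigma-compact space).\<close>
definition haar_measure :: "'g::{ab_group_add, metric_space} measure \<Rightarrow> bool" where
  "haar_measure M \<longleftrightarrow>
     sets M = sets borel \<and>
     (\<forall>a A. A \<in> sets borel \<longrightarrow> emeasure M ((\<lambda>x. a + x) ` A) = emeasure M A) \<and>
     (\<forall>K. compact K \<longrightarrow> emeasure M K < \<infinity>) \<and>
     (\<forall>U. open U \<and> U \<noteq> {} \<longrightarrow> emeasure M U > 0)"

text \<open>s x r complex matrices are represented as \<open>complex^'r^'s\<close>; the norm of this type
  is the Frobenius norm.\<close>

definition cadj :: "complex^'r^'s \<Rightarrow> complex^'s^'r" where
  "cadj A = (\<chi> i j. cnj (A $ j $ i))"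

definition L2 :: "'g measure \<Rightarrow> ('g \<Rightarrow> complex^'r^'s) set" where
  "L2 M = {f. f \<in> borel_measurable M \<and> integrable M (\<lambda>x. (norm (f x))\<^sup>2)}"

definition mip :: "'g measure \<Rightarrow> ('g \<Rightarrow> complex^'r^'s) \<Rightarrow> ('g \<Rightarrow> complex^'r^'s) \<Rightarrow> complex^'s^'s" where
  "mip M f g = (\<chi> i k. integral\<^sup>L M (\<lambda>x. (f x ** cadj (g x)) $ i $ k))"

definition ip :: "'g measure \<Rightarrow> ('g \<Rightarrow> complex^'r^'s) \<Rightarrow> ('g \<Rightarrow> complex^'r^'s) \<Rightarrow> complex" where
  "ip M f g = trace (mip M f g)"

definition L2norm :: "'g measure \<Rightarrow> ('g \<Rightarrow> complex^'r^'s) \<Rightarrow> real" where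
  "L2norm M f = sqrt (integral\<^sup>L M (\<lambda>x. (norm (f x))\<^sup>2))"

text \<open>Elements of L^2 are equivalence classes: equality means a.e. equality.\<close>
definition aeq :: "'g measure \<Rightarrow> ('g \<Rightarrow> complex^'r^'s) \<Rightarrow> ('g \<Rightarrow> complex^'r^'s) \<Rightarrow> bool" where
  "aeq M f g \<longleftrightarrow> (AE x in M. f x = g x)"

definition csmult :: "complex \<Rightarrow> complex^'r^'s \<Rightarrow> complex^'r^'s" where
  "csmult c A = (\<chi> i j. c * A $ i $ j)"


definition bounded_linear_op :: "'g measure \<Rightarrow> (('g \<Rightarrow> complex^'r::finite^'s::finite) \<Rightarrow> ('g \<Rightarrow> complex^'r^'s)) \<Rightarrow> bool" where
  "bounded_linear_op M U \<longleftrightarrow>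
     (\<forall>f \<in> L2 M. U f \<in> L2 M) \<and>
     (\<forall>f \<in> L2 M. \<forall>g \<in> L2 M. aeq M (U (\<lambda>x. f x + g x)) (\<lambda>x. U f x + U g x)) \<and>
     (\<forall>f \<in> L2 M. \<forall>c. aeq M (U (\<lambda>x. csmult c (f x))) (\<lambda>x. csmult c (U f x))) \<and>
     (\<exists>C. \<forall>f \<in> L2 M. L2norm M (U f) \<le> C * L2norm M f)"

definition bijective_op :: "'g measure \<Rightarrow> (('g \<Rightarrow> complex^'r::finite^'s::finite) \<Rightarrow> ('g \<Rightarrow> complex^'r^'s)) \<Rightarrow> bool" where
  "bijective_op M U \<longleftrightarrow>
     (\<forall>f \<in> L2 M. \<forall>g \<in> L2 M. aeq M (U f) (U g) \<longrightarrow> aeq M f g) \<and>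
     (\<forall>g \<in> L2 M. \<exists>f \<in> L2 M. aeq M (U f) g)"

definition adjointable :: "'g measure \<Rightarrow> (('g \<Rightarrow> complex^'r::finite^'s::finite) \<Rightarrow> ('g \<Rightarrow> complex^'r^'s)) \<Rightarrow> bool" where
  "adjointable M U \<longleftrightarrow>
     (\<exists>V. (\<forall>g \<in> L2 M. V g \<in> L2 M) \<and>
          (\<forall>f \<in> L2 M. \<forall>g \<in> L2 M. mip M (U f) g = mip M f (V g)))"

definition positive_op :: "'g measure \<Rightarrow> (('g \<Rightarrow> complex^'r::finite^'s::finite) \<Rightarrow> ('g \<Rightarrow> complex^'r^'s)) \<Rightarrow> bool" where
  "positive_op M T \<longleftrightarrow>
     (\<forall>f \<in> L2 M. \<forall>g \<in> L2 M. ip M (T f) g = ip M f (T g)) \<and>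
     (\<forall>f \<in> L2 M. ip M (T f) f \<in> \<real> \<and> Re (ip M (T f) f) \<ge> 0)"

definition mv_onb :: "'g measure \<Rightarrow> (nat \<Rightarrow> 'g \<Rightarrow> complex^'r^'s) \<Rightarrow> bool" where
  "mv_onb M E \<longleftrightarrow>
     (\<forall>k. E k \<in> L2 M) \<and>
     (\<forall>k j. mip M (E k) (E j) = (if k = j then mat 1 else 0)) \<and>
     (\<forall>f \<in> L2 M. (\<lambda>n. L2norm M (\<lambda>x. f x - (\<Sum>k<n. mip M f (E k) ** E k x))) \<longlonglongrightarrow> 0)"

definition mv_riesz_basis :: "'g measure \<Rightarrow> (nat \<Rightarrow> 'g \<Rightarrow> complex^'r^'s) \<Rightarrow> bool" where
  "mv_riesz_basis M F \<longleftrightarrow>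
     (\<exists>E U. mv_onb M E \<and> bounded_linear_op M U \<and> bijective_op M U \<and> adjointable M U \<and>
            (\<forall>k. aeq M (F k) (U (E k))))"

end

theory Submission
  imports Defs
begin


lemma bm_vec_nth[measurable (raw)]:
  "f \<in> borel_measurable M \<Longrightarrow> (\<lambda>x. (f x :: 'b::real_normed_vector^'n) $ i) \<in> borel_measurable M"
  by (rule borel_measurable_continuous_on[OF linear_continuous_on[OF bounded_linear_vec_nth]])
lemma bm_cnj[measurable (raw)]:
  "f \<in> borel_measurable M \<Longrightarrow> (\<lambda>x. cnj (f x)) \<in> borel_measurable M"
  by (rule borel_measurable_continuous_on[OF linear_continuous_on[OF bounded_linear_cnj]])

definition sqi :: "'a measure \<Rightarrow> ('a \<Rightarrow> 'b::euclidean_space) \<Rightarrow> bool" where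
  "sqi M f \<longleftrightarrow> f \<in> borel_measurable M \<and> integrable M (\<lambda>x. (norm (f x))\<^sup>2)"

definition qn :: "'a measure \<Rightarrow> ('a \<Rightarrow> 'b::euclidean_space) \<Rightarrow> real" where
  "qn M f = integral\<^sup>L M (\<lambda>x. (norm (f x))\<^sup>2)"

lemma L2_sqi: "f \<in> L2 M \<longleftrightarrow> sqi M f"
  by (simp add: L2_def sqi_def)

lemma L2norm_qn: "L2norm M f = sqrt (qn M f)"
  by (simp add: L2norm_def qn_def)

lemma qn_nonneg: "qn M f \<ge> 0"
  unfolding qn_def by (rule integral_nonneg_AE) auto

lemma sqi_meas[measurable_dest]: "sqi M f \<Longrightarrow> f \<in> borel_measurable M"
  by (simp add: sqi_def)

lemma sqi_int: "sqi M f \<Longrightarrow> integrable M (\<lambda>x. (norm (f x))\<^sup>2)"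
  by (simp add: sqi_def)

lemma sqi_prod_int:
  assumes "sqi M f" "sqi M g"
  shows "integrable M (\<lambda>x. norm (f x) * norm (g x))"
proof (rule Bochner_Integration.integrable_bound)
  show "integrable M (\<lambda>x. (norm (f x))\<^sup>2 + (norm (g x))\<^sup>2)"
    using assms by (auto simp: sqi_def)
  show "(\<lambda>x. norm (f x) * norm (g x)) \<in> borel_measurable M" using assms by measurable
  show "AE x in M. norm (norm (f x) * norm (g x)) \<le> norm ((norm (f x))\<^sup>2 + (norm (g x))\<^sup>2)"
  proof (rule AE_I2)
    fix x
    have "2 * (norm (f x) * norm (g x)) \<le> (norm (f x))\<^sup>2 + (norm (g x))\<^sup>2"
      using sum_squares_bound[of "norm (f x)" "norm (g x)"] by (simp add: mult.assoc)
    moreover have "0 \<le> norm (f x) * norm (g x)" by simp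
    ultimately have "norm (f x) * norm (g x) \<le> (norm (f x))\<^sup>2 + (norm (g x))\<^sup>2" by linarith
    then show "norm (norm (f x) * norm (g x)) \<le> norm ((norm (f x))\<^sup>2 + (norm (g x))\<^sup>2)"
      by simp
  qed
qed

lemma sqi_inner_int:
  assumes "sqi M f" "sqi M g"
  shows "integrable M (\<lambda>x. inner (f x) (g x))"
proof (rule Bochner_Integration.integrable_bound)
  show "integrable M (\<lambda>x. norm (f x) * norm (g x))" using sqi_prod_int[OF assms] .
  show "(\<lambda>x. inner (f x) (g x)) \<in> borel_measurable M" using assms by measurable
  show "AE x in M. norm (inner (f x) (g x)) \<le> norm (norm (f x) * norm (g x))"
    by (rule AE_I2) (simp add: Cauchy_Schwarz_ineq2)
qed

lemma sqi_add:
  assumes "sqi M f" "sqi M g"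
  shows "sqi M (\<lambda>x. f x + g x)"
  unfolding sqi_def
proof
  show "(\<lambda>x. f x + g x) \<in> borel_measurable M" using assms by measurable
  show "integrable M (\<lambda>x. (norm (f x + g x))\<^sup>2)"
  proof (rule Bochner_Integration.integrable_bound)
    show "integrable M (\<lambda>x. 2 * (norm (f x))\<^sup>2 + 2 * (norm (g x))\<^sup>2)"
      using assms by (auto simp: sqi_def)
    show "(\<lambda>x. (norm (f x + g x))\<^sup>2) \<in> borel_measurable M" using assms by measurable
    show "AE x in M. norm ((norm (f x + g x))\<^sup>2) \<le> norm (2 * (norm (f x))\<^sup>2 + 2 * (norm (g x))\<^sup>2)"
    proof (rule AE_I2)
      fix x
      have "norm (f x + g x) \<le> norm (f x) + norm (g x)" by (rule norm_triangle_ineq)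
      then have "(norm (f x + g x))\<^sup>2 \<le> (norm (f x) + norm (g x))\<^sup>2"
        by (simp add: power_mono)
      also have "\<dots> \<le> 2 * (norm (f x))\<^sup>2 + 2 * (norm (g x))\<^sup>2"
        using sum_squares_bound[of "norm (f x)" "norm (g x)"] by (simp add: power2_sum)
      finally show "norm ((norm (f x + g x))\<^sup>2) \<le> norm (2 * (norm (f x))\<^sup>2 + 2 * (norm (g x))\<^sup>2)"
        by simp
    qed
  qed
qed

lemma sqi_scaleR:
  assumes "sqi M f"
  shows "sqi M (\<lambda>x. c *\<^sub>R f x)"
  using assms unfolding sqi_def
  by (auto simp: power_mult_distrib)

lemma sqi_uminus:
  assumes "sqi M f"
  shows "sqi M (\<lambda>x. - f x)"
  using assms unfolding sqi_def by auto

lemma sqi_diff: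
  assumes "sqi M f" "sqi M g"
  shows "sqi M (\<lambda>x. f x - g x)"
  using sqi_add[OF assms(1) sqi_uminus[OF assms(2)]] by simp

lemma sqi_zero: "sqi M (\<lambda>x. 0)"
  unfolding sqi_def by simp

lemma CS_integral:
  assumes "sqi M f" "sqi M g"
  shows "\<bar>integral\<^sup>L M (\<lambda>x. inner (f x) (g x))\<bar> \<le> sqrt (qn M f) * sqrt (qn M g)"
proof -
  have [measurable]: "f \<in> borel_measurable M" "g \<in> borel_measurable M" using assms by (auto simp: sqi_def)
  have i1: "integrable M (\<lambda>x. norm (f x) * norm (g x))" using sqi_prod_int[OF assms] .
  have "(\<integral>\<^sup>+x. ennreal (norm (f x)) * ennreal (norm (g x)) \<partial>M)\<^sup>2
     \<le> (\<integral>\<^sup>+x. ennreal (norm (f x)) ^ 2 \<partial>M) * (\<integral>\<^sup>+x. ennreal (norm (g x)) ^ 2 \<partial>M)"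
    by (rule Cauchy_Schwarz_nn_integral) measurable
  also have "(\<integral>\<^sup>+x. ennreal (norm (f x)) ^ 2 \<partial>M) = (\<integral>\<^sup>+x. ennreal ((norm (f x))\<^sup>2) \<partial>M)"
    by (simp add: ennreal_power)
  also have "\<dots> = ennreal (qn M f)"
    unfolding qn_def
    by (rule nn_integral_eq_integral) (use assms in \<open>auto simp: sqi_def\<close>)
  also have "(\<integral>\<^sup>+x. ennreal (norm (g x)) ^ 2 \<partial>M) = (\<integral>\<^sup>+x. ennreal ((norm (g x))\<^sup>2) \<partial>M)"
    by (simp add: ennreal_power)
  also have "\<dots> = ennreal (qn M g)"
    unfolding qn_def
    by (rule nn_integral_eq_integral) (use assms in \<open>auto simp: sqi_def\<close>)
  also have "(\<integral>\<^sup>+x. ennreal (norm (f x)) * ennreal (norm (g x)) \<partial>M)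
      = ennreal (integral\<^sup>L M (\<lambda>x. norm (f x) * norm (g x)))"
    unfolding ennreal_mult[symmetric, OF norm_ge_zero norm_ge_zero]
    by (rule nn_integral_eq_integral[OF i1]) auto
  finally have "ennreal ((integral\<^sup>L M (\<lambda>x. norm (f x) * norm (g x)))\<^sup>2) \<le> ennreal (qn M f * qn M g)"
    by (simp add: ennreal_power ennreal_mult qn_nonneg integral_nonneg_AE)
  then have "(integral\<^sup>L M (\<lambda>x. norm (f x) * norm (g x)))\<^sup>2 \<le> qn M f * qn M g"
    using qn_nonneg[of M f] qn_nonneg[of M g] by (auto simp add: ennreal_le_iff2)
  then have A: "integral\<^sup>L M (\<lambda>x. norm (f x) * norm (g x)) \<le> sqrt (qn M f) * sqrt (qn M g)"
    by (metis real_le_rsqrt real_sqrt_mult)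
  have "\<bar>integral\<^sup>L M (\<lambda>x. inner (f x) (g x))\<bar> \<le> integral\<^sup>L M (\<lambda>x. \<bar>inner (f x) (g x)\<bar>)"
    using integral_abs_bound by blast
  also have "\<dots> \<le> integral\<^sup>L M (\<lambda>x. norm (f x) * norm (g x))"
    by (rule integral_mono[OF _ i1]) (auto simp: Cauchy_Schwarz_ineq2 intro: integrable_abs sqi_inner_int[OF assms])
  finally show ?thesis using A by linarith
qed



definition rip :: "'a measure \<Rightarrow> ('a \<Rightarrow> 'b::euclidean_space) \<Rightarrow> ('a \<Rightarrow> 'b) \<Rightarrow> real" where
  "rip M f g = integral\<^sup>L M (\<lambda>x. inner (f x) (g x))"

lemma rip_self: "rip M f f = qn M f"
  by (simp add: rip_def qn_def power2_norm_eq_inner)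

lemma rip_sym: "rip M f g = rip M g f"
  by (simp add: rip_def inner_commute)

lemma rip_add_left:
  assumes "sqi M f" "sqi M g" "sqi M h"
  shows "rip M (\<lambda>x. f x + g x) h = rip M f h + rip M g h"
  unfolding rip_def inner_add_left
  by (rule Bochner_Integration.integral_add; rule sqi_inner_int; fact)

lemma rip_diff_left:
  assumes "sqi M f" "sqi M g" "sqi M h"
  shows "rip M (\<lambda>x. f x - g x) h = rip M f h - rip M g h"
  unfolding rip_def inner_diff_left
  by (rule Bochner_Integration.integral_diff; rule sqi_inner_int; fact)

lemma rip_scale_left: "rip M (\<lambda>x. c *\<^sub>R f x) h = c * rip M f h"
  unfolding rip_def by simp

lemma rip_add_right:
  assumes "sqi M f" "sqi M g" "sqi M h"
  shows "rip M h (\<lambda>x. f x + g x) = rip M h f + rip M h g"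
  using rip_add_left[OF assms] by (simp add: rip_sym)

lemma rip_diff_right:
  assumes "sqi M f" "sqi M g" "sqi M h"
  shows "rip M h (\<lambda>x. f x - g x) = rip M h f - rip M h g"
  using rip_diff_left[OF assms] by (simp add: rip_sym)

lemma rip_scale_right: "rip M h (\<lambda>x. c *\<^sub>R f x) = c * rip M h f"
  using rip_scale_left by (metis rip_sym)

lemma rip_CS:
  assumes "sqi M f" "sqi M g"
  shows "\<bar>rip M f g\<bar> \<le> sqrt (qn M f) * sqrt (qn M g)"
  using CS_integral[OF assms] by (simp add: rip_def)

lemma rip_CS':
  assumes "sqi M f" "sqi M g"
  shows "rip M f g \<le> sqrt (qn M f) * sqrt (qn M g)"
  using rip_CS[OF assms] by linarith

lemma qn_add:
  assumes "sqi M f" "sqi M g"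
  shows "qn M (\<lambda>x. f x + g x) = qn M f + 2 * rip M f g + qn M g"
proof -
  have "qn M (\<lambda>x. f x + g x) = rip M (\<lambda>x. f x + g x) (\<lambda>x. f x + g x)" by (simp add: rip_self)
  also have "\<dots> = rip M f f + rip M f g + (rip M g f + rip M g g)"
    using assms sqi_add[OF assms] by (simp add: rip_add_left rip_add_right)
  finally show ?thesis by (simp add: rip_self rip_sym)
qed

lemma qn_triangle:
  assumes "sqi M f" "sqi M g"
  shows "sqrt (qn M (\<lambda>x. f x + g x)) \<le> sqrt (qn M f) + sqrt (qn M g)"
proof -
  have "qn M (\<lambda>x. f x + g x) \<le> qn M f + 2 * (sqrt (qn M f) * sqrt (qn M g)) + qn M g"
    using qn_add[OF assms] rip_CS'[OF assms] by linarith
  also have "\<dots> = (sqrt (qn M f) + sqrt (qn M g))\<^sup>2"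
    using qn_nonneg[of M f] qn_nonneg[of M g] by (simp add: power2_sum)
  finally show ?thesis
    using qn_nonneg[of M f] qn_nonneg[of M g] real_le_lsqrt real_sqrt_le_mono by fastforce
qed

lemma qn_triangle_diff:
  assumes "sqi M f" "sqi M g" "sqi M h"
  shows "sqrt (qn M (\<lambda>x. f x - h x)) \<le> sqrt (qn M (\<lambda>x. f x - g x)) + sqrt (qn M (\<lambda>x. g x - h x))"
  using qn_triangle[OF sqi_diff[OF assms(1,2)] sqi_diff[OF assms(2,3)]] by simp

lemma qn_scale: "qn M (\<lambda>x. c *\<^sub>R f x) = c\<^sup>2 * qn M f"
  by (simp add: qn_def power_mult_distrib)

lemma qn_uminus: "qn M (\<lambda>x. - f x) = qn M f"
  by (simp add: qn_def)

lemma qn_cong_meas: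
  assumes "f \<in> borel_measurable M" "g \<in> borel_measurable M" "AE x in M. f x = g x"
  shows "qn M f = qn M g"
  unfolding qn_def by (rule integral_cong_AE) (use assms in \<open>auto elim: eventually_mono\<close>)

lemma rip_cong_left:
  assumes "f \<in> borel_measurable M" "f' \<in> borel_measurable M" "h \<in> borel_measurable M"
    "AE x in M. f x = f' x"
  shows "rip M f h = rip M f' h"
  unfolding rip_def by (rule integral_cong_AE) (use assms in \<open>auto elim: eventually_mono\<close>)

lemma rip_cong_right:
  assumes "f \<in> borel_measurable M" "f' \<in> borel_measurable M" "h \<in> borel_measurable M"
    "AE x in M. f x = f' x"
  shows "rip M h f = rip M h f'"
  using rip_cong_left[OF assms] by (simp add: rip_sym)

lemma qn_zero_iff:
  assumes "sqi M f"
  shows "qn M f = 0 \<longleftrightarrow> (AE x in M. f x = 0)"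
proof -
  have "qn M f = 0 \<longleftrightarrow> (AE x in M. (norm (f x))\<^sup>2 = 0)"
    unfolding qn_def by (rule integral_nonneg_eq_0_iff_AE) (use assms in \<open>auto simp: sqi_def\<close>)
  then show ?thesis by simp
qed

lemma sqi_cong:
  assumes "sqi M f" "g \<in> borel_measurable M" "AE x in M. f x = g x"
  shows "sqi M g"
proof -
  have [measurable]: "f \<in> borel_measurable M" "g \<in> borel_measurable M" using assms by (auto simp: sqi_def)
  have "integrable M (\<lambda>x. (norm (g x))\<^sup>2)"
  proof (rule integrable_cong_AE_imp[where g="\<lambda>x. (norm (f x))\<^sup>2"])
    show "integrable M (\<lambda>x. (norm (f x))\<^sup>2)" using assms(1) by (simp add: sqi_def)
    show "(\<lambda>x. (norm (g x))\<^sup>2) \<in> borel_measurable M" by measurable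
    show "AE x in M. (norm (f x))\<^sup>2 = (norm (g x))\<^sup>2"
      using assms(3) by (rule eventually_mono) simp
  qed
  then show ?thesis using assms by (simp add: sqi_def)
qed

lemma mmult_cadj_entry: "((A::complex^'r^'s) ** cadj (B::complex^'r^'t)) $ i $ k = (\<Sum>j\<in>UNIV. A $ i $ j * cnj (B $ k $ j))"
  by (simp add: matrix_matrix_mult_def cadj_def)

lemma mip_entry_int:
  fixes f g :: "'a \<Rightarrow> complex^'r^'s"
  assumes "sqi M f" "sqi M g"
  shows "integrable M (\<lambda>x. (f x ** cadj (g x)) $ i $ k)"
  unfolding mmult_cadj_entry
proof (rule Bochner_Integration.integrable_sum)
  fix j
  show "integrable M (\<lambda>x. f x $ i $ j * cnj (g x $ k $ j))"
  proof (rule Bochner_Integration.integrable_bound)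
    show "integrable M (\<lambda>x. norm (f x) * norm (g x))" using sqi_prod_int[OF assms] .
    show "(\<lambda>x. f x $ i $ j * cnj (g x $ k $ j)) \<in> borel_measurable M" using assms by measurable
    show "AE x in M. norm (f x $ i $ j * cnj (g x $ k $ j)) \<le> norm (norm (f x) * norm (g x))"
    proof (rule AE_I2)
      fix x
      have "norm (f x $ i $ j) \<le> norm (f x)" by (rule order_trans[OF Finite_Cartesian_Product.norm_nth_le Finite_Cartesian_Product.norm_nth_le])
      moreover have "norm (g x $ k $ j) \<le> norm (g x)" by (rule order_trans[OF Finite_Cartesian_Product.norm_nth_le Finite_Cartesian_Product.norm_nth_le])
      ultimately have "norm (f x $ i $ j) * norm (g x $ k $ j) \<le> norm (f x) * norm (g x)"
        by (intro mult_mono) auto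
      then show "norm (f x $ i $ j * cnj (g x $ k $ j)) \<le> norm (norm (f x) * norm (g x))"
        by (simp only: norm_mult complex_mod_cnj real_norm_def abs_mult abs_norm_cancel)
    qed
  qed
qed

lemma inner_as_trace: "inner (A::complex^'r^'s) B = (\<Sum>i\<in>UNIV. Re ((A ** cadj B) $ i $ i))"
  unfolding inner_vec_def inner_complex_def mmult_cadj_entry Re_sum by simp

lemma Re_ip:
  fixes f g :: "'a \<Rightarrow> complex^'r^'s"
  assumes "sqi M f" "sqi M g"
  shows "Re (ip M f g) = rip M f g"
proof -
  have "Re (ip M f g) = (\<Sum>i\<in>UNIV. Re (integral\<^sup>L M (\<lambda>x. (f x ** cadj (g x)) $ i $ i)))"
    unfolding ip_def mip_def trace_def Re_sum by simp
  also have "\<dots> = (\<Sum>i\<in>UNIV. integral\<^sup>L M (\<lambda>x. Re ((f x ** cadj (g x)) $ i $ i)))"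
    by (rule sum.cong[OF refl], rule integral_Re[symmetric], rule mip_entry_int[OF assms])
  also have "\<dots> = integral\<^sup>L M (\<lambda>x. \<Sum>i\<in>UNIV. Re ((f x ** cadj (g x)) $ i $ i))"
    by (rule Bochner_Integration.integral_sum[symmetric]) (use mip_entry_int[OF assms] in auto)
  also have "\<dots> = rip M f g" unfolding rip_def inner_as_trace ..
  finally show ?thesis .
qed



lemma csmult_add: "csmult c (A + B) = csmult c A + csmult c B"
  by (simp add: csmult_def vec_eq_iff distrib_left)

lemma csmult_real: "csmult (complex_of_real a) A = a *\<^sub>R A"
proof -
  have "(a *\<^sub>R A) $ i $ j = a *\<^sub>R (A $ i $ j)" for i j by simp
  moreover have "a *\<^sub>R (z::complex) = complex_of_real a * z" for z by (rule scaleR_conv_of_real)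
  ultimately have "(a *\<^sub>R A) $ i $ j = complex_of_real a * A $ i $ j" for i j by metis
  then show ?thesis unfolding csmult_def vec_eq_iff by simp
qed

lemma csmult_scaleR: "csmult c (a *\<^sub>R A) = a *\<^sub>R csmult c A"
  by (simp add: csmult_def vec_eq_iff scaleR_conv_of_real)

lemma norm_csmult: "norm (csmult c (A::complex^'r^'s)) = cmod c * norm A"
proof -
  have r: "norm (csmult c A $ i) = cmod c * norm (A $ i)" for i
    unfolding norm_vec_def csmult_def
    by (simp add: norm_mult L2_set_right_distrib)
  show ?thesis
    unfolding norm_vec_def[of "csmult c A"] r
    by (simp add: L2_set_right_distrib norm_vec_def)
qed

lemma bounded_linear_csmult: "bounded_linear (\<lambda>A::complex^'r^'s. csmult c A)"
  by (rule bounded_linear_intro[where K="cmod c"])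
    (auto simp: csmult_add csmult_scaleR norm_csmult)

lemma bm_csmult[measurable (raw)]:
  "f \<in> borel_measurable M \<Longrightarrow> (\<lambda>x. csmult c (f x :: complex^'r^'s)) \<in> borel_measurable M"
  by (rule borel_measurable_continuous_on[OF linear_continuous_on[OF bounded_linear_csmult]])

lemma sqi_csmult:
  fixes f :: "'a \<Rightarrow> complex^'r^'s"
  assumes "sqi M f" shows "sqi M (\<lambda>x. csmult c (f x))"
  using assms unfolding sqi_def by (auto simp: norm_csmult power_mult_distrib)

lemma aeq_refl: "aeq M f f" by (simp add: aeq_def)
lemma aeq_sym: "aeq M f g \<Longrightarrow> aeq M g f" by (simp add: aeq_def eq_commute)
lemma aeq_trans: "aeq M f g \<Longrightarrow> aeq M g h \<Longrightarrow> aeq M f h"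
  unfolding aeq_def by (auto elim: eventually_rev_mp)

definition rlin :: "'a measure \<Rightarrow> (('a \<Rightarrow> complex^'r::finite^'s::finite) \<Rightarrow> ('a \<Rightarrow> complex^'r^'s)) \<Rightarrow> bool" where
  "rlin M B \<longleftrightarrow> (\<forall>f. sqi M f \<longrightarrow> sqi M (B f)) \<and>
     (\<forall>f g. sqi M f \<longrightarrow> sqi M g \<longrightarrow> aeq M (B (\<lambda>x. f x + g x)) (\<lambda>x. B f x + B g x)) \<and>
     (\<forall>f a. sqi M f \<longrightarrow> aeq M (B (\<lambda>x. a *\<^sub>R f x)) (\<lambda>x. a *\<^sub>R B f x)) \<and>
     (\<exists>C. \<forall>f. sqi M f \<longrightarrow> sqrt (qn M (B f)) \<le> C * sqrt (qn M f))"

definition symop :: "'a measure \<Rightarrow> (('a \<Rightarrow> complex^'r::finite^'s::finite) \<Rightarrow> ('a \<Rightarrow> complex^'r^'s)) \<Rightarrow> bool" where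
  "symop M B \<longleftrightarrow> (\<forall>f g. sqi M f \<longrightarrow> sqi M g \<longrightarrow> rip M (B f) g = rip M f (B g))"

definition posop :: "'a measure \<Rightarrow> (('a \<Rightarrow> complex^'r::finite^'s::finite) \<Rightarrow> ('a \<Rightarrow> complex^'r^'s)) \<Rightarrow> bool" where
  "posop M B \<longleftrightarrow> (\<forall>f. sqi M f \<longrightarrow> rip M (B f) f \<ge> 0)"

lemma blo_rlin:
  assumes "bounded_linear_op M A" shows "rlin M A"
proof -
  have "aeq M (A (\<lambda>x. a *\<^sub>R f x)) (\<lambda>x. a *\<^sub>R A f x)" if "sqi M f" for f a
  proof -
    have "f \<in> L2 M" using that by (simp add: L2_sqi)
    then show ?thesis using assms unfolding bounded_linear_op_def csmult_real[symmetric] by blast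
  qed
  moreover have "\<forall>f. sqi M f \<longrightarrow> sqi M (A f)"
    using assms unfolding bounded_linear_op_def Ball_def L2_sqi by blast
  moreover have "\<forall>f g. sqi M f \<longrightarrow> sqi M g \<longrightarrow> aeq M (A (\<lambda>x. f x + g x)) (\<lambda>x. A f x + A g x)"
    using assms unfolding bounded_linear_op_def Ball_def L2_sqi by blast
  moreover have "\<exists>C. \<forall>f. sqi M f \<longrightarrow> sqrt (qn M (A f)) \<le> C * sqrt (qn M f)"
    using assms unfolding bounded_linear_op_def Ball_def L2_sqi L2norm_qn by blast
  ultimately show ?thesis unfolding rlin_def by blast
qed

lemma rlin_sqi: "rlin M B \<Longrightarrow> sqi M f \<Longrightarrow> sqi M (B f)"
  by (simp add: rlin_def)
lemma rlin_add: "rlin M B \<Longrightarrow> sqi M f \<Longrightarrow> sqi M g \<Longrightarrow> aeq M (B (\<lambda>x. f x + g x)) (\<lambda>x. B f x + B g x)"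
  by (simp add: rlin_def)
lemma rlin_scale: "rlin M B \<Longrightarrow> sqi M f \<Longrightarrow> aeq M (B (\<lambda>x. a *\<^sub>R f x)) (\<lambda>x. a *\<^sub>R B f x)"
  by (simp add: rlin_def)
lemma rlin_bound:
  fixes B :: "('a \<Rightarrow> complex^'r::finite^'s::finite) \<Rightarrow> ('a \<Rightarrow> complex^'r^'s)"
  assumes "rlin M B" obtains C where "C > 0" "\<And>f. sqi M f \<Longrightarrow> sqrt (qn M (B f)) \<le> C * sqrt (qn M f)"
proof -
  obtain C where C: "\<And>f. sqi M f \<Longrightarrow> sqrt (qn M (B f)) \<le> C * sqrt (qn M f)"
    using assms by (auto simp: rlin_def)
  show ?thesis
  proof (rule that[of "max C 1"])
    fix f :: "'a \<Rightarrow> complex^'r^'s" assume "sqi M f"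
    then have "sqrt (qn M (B f)) \<le> C * sqrt (qn M f)" by (rule C)
    also have "\<dots> \<le> max C 1 * sqrt (qn M f)" by (rule mult_right_mono) (auto simp: qn_nonneg)
    finally show "sqrt (qn M (B f)) \<le> max C 1 * sqrt (qn M f)" .
  qed auto
qed

lemma aeq_sqi_meas: "sqi M f \<Longrightarrow> f \<in> borel_measurable M" by (simp add: sqi_def)

lemma rlin_diff:
  assumes "rlin M B" "sqi M f" "sqi M g"
  shows "aeq M (B (\<lambda>x. f x - g x)) (\<lambda>x. B f x - B g x)"
proof -
  have "aeq M (B (\<lambda>x. (f x - g x) + g x)) (\<lambda>x. B (\<lambda>x. f x - g x) x + B g x)"
    by (rule rlin_add[OF assms(1) sqi_diff[OF assms(2,3)] assms(3)])
  then have "aeq M (B f) (\<lambda>x. B (\<lambda>x. f x - g x) x + B g x)" by simp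
  then show ?thesis unfolding aeq_def by (auto elim: eventually_mono)
qed

lemma rlin_zero:
  assumes "rlin M B" "sqi M f" "AE x in M. f x = 0"
  shows "AE x in M. B f x = 0"
proof -
  obtain C where C: "\<And>f. sqi M f \<Longrightarrow> sqrt (qn M (B f)) \<le> C * sqrt (qn M f)"
    using assms(1) by (auto simp: rlin_def)
  have "qn M f = 0" using qn_zero_iff[OF assms(2)] assms(3) by simp
  then have "sqrt (qn M (B f)) \<le> 0" using C[OF assms(2)] by simp
  then have "qn M (B f) = 0" using qn_nonneg[of M "B f"] by simp
  then show ?thesis using qn_zero_iff[OF rlin_sqi[OF assms(1,2)]] by simp
qed

lemma rlin_cong:
  assumes "rlin M B" "sqi M f" "sqi M g" "aeq M f g"
  shows "aeq M (B f) (B g)"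
proof -
  have "AE x in M. B (\<lambda>x. f x - g x) x = 0"
    by (rule rlin_zero[OF assms(1) sqi_diff[OF assms(2,3)]]) (use assms(4) in \<open>auto simp: aeq_def elim: eventually_mono\<close>)
  moreover have "aeq M (B (\<lambda>x. f x - g x)) (\<lambda>x. B f x - B g x)" by (rule rlin_diff[OF assms(1-3)])
  ultimately show ?thesis unfolding aeq_def by eventually_elim simp
qed

lemma rip_aeq_left:
  assumes "sqi M f" "sqi M f'" "sqi M h" "aeq M f f'"
  shows "rip M f h = rip M f' h"
  using assms by (intro rip_cong_left) (auto simp: sqi_def aeq_def)

lemma rip_aeq_right:
  assumes "sqi M f" "sqi M f'" "sqi M h" "aeq M f f'"
  shows "rip M h f = rip M h f'"
  using assms by (intro rip_cong_right) (auto simp: sqi_def aeq_def)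

lemma qn_aeq:
  assumes "sqi M f" "sqi M f'" "aeq M f f'"
  shows "qn M f = qn M f'"
  using assms by (intro qn_cong_meas) (auto simp: sqi_def aeq_def)



lemma posq:
  assumes B: "rlin M B" "symop M B" "posop M B"
    and up: "\<And>w. sqi M w \<Longrightarrow> rip M (B w) w \<le> q * qn M w"
    and q: "q > 0" and u: "sqi M u"
  shows "qn M (B u) \<le> q * rip M (B u) u"
proof -
  define v where "v = B u"
  define t where "t = 1 / q"
  have v: "sqi M v" unfolding v_def by (rule rlin_sqi[OF B(1) u])
  have Bv: "sqi M (B v)" by (rule rlin_sqi[OF B(1) v])
  have tv: "sqi M (\<lambda>x. t *\<^sub>R v x)" by (rule sqi_scaleR[OF v])
  define w where "w = (\<lambda>x. u x - t *\<^sub>R v x)"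
  have w: "sqi M w" unfolding w_def by (rule sqi_diff[OF u tv])
  have Bw: "aeq M (B w) (\<lambda>x. v x - t *\<^sub>R B v x)"
  proof -
    have "aeq M (B w) (\<lambda>x. B u x - B (\<lambda>x. t *\<^sub>R v x) x)"
      unfolding w_def by (rule rlin_diff[OF B(1) u tv])
    moreover have "aeq M (B (\<lambda>x. t *\<^sub>R v x)) (\<lambda>x. t *\<^sub>R B v x)" by (rule rlin_scale[OF B(1) v])
    ultimately show ?thesis unfolding aeq_def v_def by eventually_elim simp
  qed
  have tBv: "sqi M (\<lambda>x. t *\<^sub>R B v x)" by (rule sqi_scaleR[OF Bv])
  have s2: "sqi M (\<lambda>x. v x - t *\<^sub>R B v x)" by (rule sqi_diff[OF v tBv])
  have "0 \<le> rip M (B w) w" using B(3) w by (simp add: posop_def)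
  also have "\<dots> = rip M (\<lambda>x. v x - t *\<^sub>R B v x) w"
    by (rule rip_aeq_left[OF rlin_sqi[OF B(1) w] s2 w Bw])
  also have "\<dots> = rip M v w - t * rip M (B v) w"
    using rip_diff_left[OF v tBv w] by (simp add: rip_scale_left)
  also have "rip M v w = rip M v u - t * rip M v v"
    unfolding w_def using rip_diff_right[OF u tv v] by (simp add: rip_scale_right)
  also have "rip M (B v) w = rip M (B v) u - t * rip M (B v) v"
    unfolding w_def using rip_diff_right[OF u tv Bv] by (simp add: rip_scale_right)
  also have "rip M (B v) u = rip M v v"
    using B(2) v u unfolding symop_def v_def by (simp add: rip_sym)
  also have "rip M v u = rip M (B u) u" by (simp add: v_def)
  finally have "0 \<le> rip M (B u) u - t * qn M v - t * (qn M v - t * rip M (B v) v)"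
    by (simp add: rip_self)
  moreover have "rip M (B v) v \<le> q * qn M v" by (rule up[OF v])
  moreover have "t > 0" using q by (simp add: t_def)
  ultimately have "0 \<le> rip M (B u) u - t * qn M v - t * (qn M v - t * (q * qn M v))"
    by (smt (verit, best) mult_left_mono)
  also have "\<dots> = rip M (B u) u - t * qn M v"
    using q by (simp add: t_def field_simps)
  finally have "t * qn M v \<le> rip M (B u) u" by simp
  then have "qn M v \<le> q * rip M (B u) u"
    using q by (simp add: t_def field_simps)
  then show ?thesis by (simp add: v_def)
qed



lemma qn_nn: "sqi M f \<Longrightarrow> (\<integral>\<^sup>+x. ennreal ((norm (f x))\<^sup>2) \<partial>M) = ennreal (qn M f)"
  unfolding qn_def by (rule nn_integral_eq_integral) (auto simp: sqi_def)

lemma sqi_norm: "sqi M f \<Longrightarrow> sqi M (\<lambda>x. norm (f x))"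
  unfolding sqi_def by (auto intro: borel_measurable_norm)

lemma qn_norm: "qn M (\<lambda>x. norm (f x)) = qn M f"
  by (simp add: qn_def)

lemma cauchy_bound:
  fixes s :: "nat \<Rightarrow> 'a \<Rightarrow> 'b::euclidean_space"
  assumes s: "\<And>n. sqi M (s n)"
    and step: "\<And>n. sqrt (qn M (\<lambda>x. s (Suc n) x - s n x)) \<le> d n"
  shows "sqrt (qn M (\<lambda>x. s (N + k) x - s N x)) \<le> (\<Sum>n<k. d (N + n))"
proof (induction k)
  case 0
  then show ?case by (simp add: qn_def)
next
  case (Suc k)
  have "sqrt (qn M (\<lambda>x. s (N + Suc k) x - s N x))
     \<le> sqrt (qn M (\<lambda>x. s (N + Suc k) x - s (N + k) x)) + sqrt (qn M (\<lambda>x. s (N + k) x - s N x))"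
    by (rule qn_triangle_diff[OF s s s])
  also have "\<dots> \<le> d (N + k) + (\<Sum>n<k. d (N + n))"
    using step[of "N + k"] Suc.IH by simp
  finally show ?case by (simp add: add.commute)
qed

lemma geom_tail:
  fixes q K :: real
  assumes "0 \<le> q" "q < 1" "0 \<le> K"
  shows "(\<Sum>n<k. K * q ^ (N + n)) \<le> K * q ^ N / (1 - q)"
proof -
  have "(\<Sum>n<k. K * q ^ (N + n)) = K * q ^ N * (\<Sum>n<k. q ^ n)"
    by (simp add: sum_distrib_left power_add mult.assoc)
  also have "(\<Sum>n<k. q ^ n) = (1 - q ^ k) / (1 - q)"
    using assms by (simp add: geometric_sum field_simps)
  also have "\<dots> \<le> 1 / (1 - q)"
    using assms by (simp add: divide_right_mono)
  finally show ?thesis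
    using assms by (simp add: mult_left_mono)
qed

lemma L2_complete:
  fixes s :: "nat \<Rightarrow> 'a \<Rightarrow> 'b::euclidean_space"
  assumes s: "\<And>n. sqi M (s n)" and q: "0 \<le> q" "q < 1"
    and step: "\<And>n. sqrt (qn M (\<lambda>x. s (Suc n) x - s n x)) \<le> K * q ^ n"
  shows "\<exists>f. sqi M f \<and> (\<lambda>n. qn M (\<lambda>x. s n x - f x)) \<longlonglongrightarrow> 0"
proof -
  have [measurable]: "\<And>n. s n \<in> borel_measurable M" using s by (simp add: sqi_def)
  have K: "0 \<le> K" using step[of 0] real_sqrt_ge_zero[OF qn_nonneg] by (metis order_trans power_0 mult_1_right)
  define R where "R N = K * q ^ N / (1 - q)" for N
  have R0: "0 \<le> R N" for N using K q by (simp add: R_def)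
  have cb: "sqrt (qn M (\<lambda>x. s (N + k) x - s N x)) \<le> R N" for N k
    using cauchy_bound[where s=s and d="\<lambda>n. K * q ^ n", OF s step, of N k] geom_tail[OF q K, where k=k and N=N] by (simp add: R_def)
  define h where "h n x = s (Suc n) x - s n x" for n x
  have h: "sqi M (h n)" for n unfolding h_def by (rule sqi_diff[OF s s])
  have [measurable]: "h n \<in> borel_measurable M" for n using h by (simp add: sqi_def)
  define G where "G k x = (\<Sum>n<k. norm (h n x))" for k x
  have G: "sqi M (G k) \<and> sqrt (qn M (G k)) \<le> (\<Sum>n<k. K * q ^ n)" for k
  proof (induction k)
    case 0
    then show ?case by (simp add: G_def sqi_zero qn_def)
  next
    case (Suc k)
    have eq: "G (Suc k) = (\<lambda>x. G k x + norm (h k x))" by (simp add: G_def fun_eq_iff)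
    have "sqi M (G (Suc k))" unfolding eq by (rule sqi_add[OF Suc.IH[THEN conjunct1] sqi_norm[OF h]])
    moreover have "sqrt (qn M (G (Suc k))) \<le> sqrt (qn M (G k)) + sqrt (qn M (\<lambda>x. norm (h k x)))"
      unfolding eq by (rule qn_triangle[OF Suc.IH[THEN conjunct1] sqi_norm[OF h]])
    moreover have "sqrt (qn M (\<lambda>x. norm (h k x))) \<le> K * q ^ k"
      using step[of k] by (simp add: qn_norm h_def)
    ultimately show ?case using Suc.IH by simp
  qed
  define R0' where "R0' = K / (1 - q)"
  have GR: "qn M (G k) \<le> R0'\<^sup>2" for k
  proof -
    have "sqrt (qn M (G k)) \<le> R0'"
      using G[of k] geom_tail[OF q K, where k=k and N=0] by (simp add: R0'_def)
    then have "(sqrt (qn M (G k)))\<^sup>2 \<le> R0'\<^sup>2" by (rule power_mono) (simp add: qn_nonneg)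
    then show ?thesis using qn_nonneg[of M "G k"] by simp
  qed
  have [measurable]: "G k \<in> borel_measurable M" for k unfolding G_def by measurable
  have Gnn: "0 \<le> G k x" for k x by (simp add: G_def sum_nonneg)
  have Ginc: "G k x \<le> G (Suc k) x" for k x by (simp add: G_def)
  have "incseq (\<lambda>k x. ennreal ((G k x)\<^sup>2))"
    by (intro incseq_SucI le_funI ennreal_leI power_mono Ginc Gnn)
  then have "(\<integral>\<^sup>+x. (SUP k. ennreal ((G k x)\<^sup>2)) \<partial>M) = (SUP k. \<integral>\<^sup>+x. ennreal ((G k x)\<^sup>2) \<partial>M)"
    by (intro nn_integral_monotone_convergence_SUP) auto
  also have "\<dots> \<le> ennreal (R0'\<^sup>2)"
  proof (rule SUP_least)
    fix k
    have "(\<integral>\<^sup>+x. ennreal ((G k x)\<^sup>2) \<partial>M) = ennreal (qn M (G k))"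
      using qn_nn[OF G[THEN conjunct1], of k] Gnn by simp
    then show "(\<integral>\<^sup>+x. ennreal ((G k x)\<^sup>2) \<partial>M) \<le> ennreal (R0'\<^sup>2)"
      using GR[of k] by (simp add: ennreal_leI)
  qed
  finally have fin: "(\<integral>\<^sup>+x. (SUP k. ennreal ((G k x)\<^sup>2)) \<partial>M) < \<infinity>"
    by (rule order.strict_trans1) simp
  have "AE x in M. (SUP k. ennreal ((G k x)\<^sup>2)) < \<infinity>"
    by (rule finite_nn_integral_imp_ae_finite[OF _ fin]) measurable
  then have AEconv: "AE x in M. convergent (\<lambda>k. s k x)"
  proof (rule eventually_mono)
    fix x assume fx: "(SUP k. ennreal ((G k x)\<^sup>2)) < \<infinity>"
    define B where "B = enn2real (SUP k. ennreal ((G k x)\<^sup>2))"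
    have "ennreal ((G k x)\<^sup>2) \<le> (SUP k. ennreal ((G k x)\<^sup>2))" for k by (rule SUP_upper) auto
    then have "enn2real (ennreal ((G k x)\<^sup>2)) \<le> B" for k unfolding B_def using fx
      by (intro enn2real_mono) auto
    then have "(G k x)\<^sup>2 \<le> B" for k by simp
    then have Gb: "G k x \<le> sqrt B" for k by (rule real_le_rsqrt)
    have "summable (\<lambda>n. norm (h n x))"
      by (rule summableI_nonneg_bounded[where x="sqrt B"]) (use Gb in \<open>auto simp: G_def\<close>)
    then have "summable (\<lambda>n. h n x)" by (rule summable_norm_cancel)
    then have "convergent (\<lambda>k. \<Sum>n<k. h n x)" by (simp add: summable_iff_convergent)
    then have "convergent (\<lambda>k. (\<Sum>n<k. h n x) + s 0 x)" by (intro convergent_add convergent_const)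
    moreover have "(\<Sum>n<k. h n x) + s 0 x = s k x" for k
      unfolding h_def using sum_lessThan_telescope[of "\<lambda>n. s n x" k] by simp
    ultimately show "convergent (\<lambda>k. s k x)" by simp
  qed
  define f where "f x = lim (\<lambda>k. s k x)" for x
  have [measurable]: "f \<in> borel_measurable M" unfolding f_def by measurable
  have AElim: "AE x in M. (\<lambda>k. s k x) \<longlonglongrightarrow> f x"
    using AEconv by (rule eventually_mono) (simp add: f_def convergent_LIMSEQ_iff)
  have main: "sqi M (\<lambda>x. s N x - f x) \<and> qn M (\<lambda>x. s N x - f x) \<le> (R N)\<^sup>2" for N
  proof -
    have "(\<integral>\<^sup>+x. ennreal ((norm (s N x - f x))\<^sup>2) \<partial>M)
        = (\<integral>\<^sup>+x. liminf (\<lambda>m. ennreal ((norm (s N x - s m x))\<^sup>2)) \<partial>M)"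
    proof (rule nn_integral_cong_AE)
      show "AE x in M. ennreal ((norm (s N x - f x))\<^sup>2) = liminf (\<lambda>m. ennreal ((norm (s N x - s m x))\<^sup>2))"
        using AElim
      proof (rule eventually_mono)
        fix x assume "(\<lambda>k. s k x) \<longlonglongrightarrow> f x"
        then have L: "(\<lambda>m. ennreal ((norm (s N x - s m x))\<^sup>2)) \<longlonglongrightarrow> ennreal ((norm (s N x - f x))\<^sup>2)"
          by (intro tendsto_intros)
        show "ennreal ((norm (s N x - f x))\<^sup>2) = liminf (\<lambda>m. ennreal ((norm (s N x - s m x))\<^sup>2))"
          by (rule lim_imp_Liminf[symmetric, OF _ L]) simp
      qed
    qed
    also have "\<dots> \<le> liminf (\<lambda>m. \<integral>\<^sup>+x. ennreal ((norm (s N x - s m x))\<^sup>2) \<partial>M)"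
      by (rule nn_integral_liminf) measurable
    also have "\<dots> \<le> ennreal ((R N)\<^sup>2)"
    proof (rule Liminf_le)
      show "\<forall>\<^sub>F m in sequentially. (\<integral>\<^sup>+x. ennreal ((norm (s N x - s m x))\<^sup>2) \<partial>M) \<le> ennreal ((R N)\<^sup>2)"
        unfolding eventually_sequentially
      proof (intro exI allI impI)
        fix m assume "N \<le> m"
        then obtain k where m: "m = N + k" using le_Suc_ex by blast
        have "(\<integral>\<^sup>+x. ennreal ((norm (s N x - s m x))\<^sup>2) \<partial>M) = ennreal (qn M (\<lambda>x. s N x - s m x))"
          by (rule qn_nn[OF sqi_diff[OF s s]])
        also have "qn M (\<lambda>x. s N x - s m x) = qn M (\<lambda>x. s (N + k) x - s N x)"
          using qn_uminus[of M "\<lambda>x. s (N + k) x - s N x"] by (simp add: m)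
        also have "\<dots> \<le> (R N)\<^sup>2"
        proof -
          have "(sqrt (qn M (\<lambda>x. s (N + k) x - s N x)))\<^sup>2 \<le> (R N)\<^sup>2"
            by (rule power_mono[OF cb]) (simp add: qn_nonneg)
          then show ?thesis using qn_nonneg[of M "\<lambda>x. s (N + k) x - s N x"] by simp
        qed
        finally show "(\<integral>\<^sup>+x. ennreal ((norm (s N x - s m x))\<^sup>2) \<partial>M) \<le> ennreal ((R N)\<^sup>2)"
          by (simp add: ennreal_leI)
      qed
    qed simp
    finally have nn: "(\<integral>\<^sup>+x. ennreal ((norm (s N x - f x))\<^sup>2) \<partial>M) \<le> ennreal ((R N)\<^sup>2)" .
    have int: "integrable M (\<lambda>x. (norm (s N x - f x))\<^sup>2)"
    proof (rule integrableI_nonneg)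
      show "(\<lambda>x. (norm (s N x - f x))\<^sup>2) \<in> borel_measurable M" by measurable
      show "AE x in M. 0 \<le> (norm (s N x - f x))\<^sup>2" by simp
      show "(\<integral>\<^sup>+x. ennreal ((norm (s N x - f x))\<^sup>2) \<partial>M) < \<infinity>"
        using nn by (rule order.strict_trans1) simp
    qed
    have sq: "sqi M (\<lambda>x. s N x - f x)" using int by (simp add: sqi_def)
    have "ennreal (qn M (\<lambda>x. s N x - f x)) \<le> ennreal ((R N)\<^sup>2)" using nn qn_nn[OF sq] by simp
    then have "qn M (\<lambda>x. s N x - f x) \<le> (R N)\<^sup>2" by (auto simp add: ennreal_le_iff2)
    with sq show ?thesis by simp
  qed
  have "sqi M f"
    using sqi_diff[OF s main[THEN conjunct1], of 0 0] by simp
  moreover have "(\<lambda>n. qn M (\<lambda>x. s n x - f x)) \<longlonglongrightarrow> 0"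
  proof (rule tendsto_sandwich[where f="\<lambda>n. 0" and h="\<lambda>n. (R n)\<^sup>2"])
    show "\<forall>\<^sub>F n in sequentially. 0 \<le> qn M (\<lambda>x. s n x - f x)" by (simp add: qn_nonneg)
    show "\<forall>\<^sub>F n in sequentially. qn M (\<lambda>x. s n x - f x) \<le> (R n)\<^sup>2" using main by simp
    show "(\<lambda>n. 0) \<longlonglongrightarrow> (0::real)" by simp
    have "(\<lambda>n. K * q ^ n / (1 - q)) \<longlonglongrightarrow> K * 0 / (1 - q)"
      using q by (intro tendsto_intros LIMSEQ_power_zero) auto
    then have "R \<longlonglongrightarrow> 0" by (simp add: R_def[abs_def])
    then show "(\<lambda>n. (R n)\<^sup>2) \<longlonglongrightarrow> 0" using tendsto_power[of R 0 sequentially 2] by simp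
  qed
  ultimately show ?thesis by blast
qed



lemma rlin_comb:
  fixes A :: "('g \<Rightarrow> complex^'r::finite^'s::finite) \<Rightarrow> ('g \<Rightarrow> complex^'r^'s)"
  assumes "rlin M A"
  shows "rlin M (\<lambda>f x. a *\<^sub>R f x + b *\<^sub>R A f x)"
proof -
  obtain C where C: "C > 0" "\<And>f::'g \<Rightarrow> complex^'r^'s. sqi M f \<Longrightarrow> sqrt (qn M (A f)) \<le> C * sqrt (qn M f)"
    using rlin_bound[OF assms] by blast
  have 1: "sqi M (\<lambda>x. a *\<^sub>R f x + b *\<^sub>R A f x)" if "sqi M f" for f
    using that by (intro sqi_add sqi_scaleR rlin_sqi[OF assms])
  have 2: "aeq M (\<lambda>x. a *\<^sub>R (f x + g x) + b *\<^sub>R A (\<lambda>x. f x + g x) x)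
     (\<lambda>x. (a *\<^sub>R f x + b *\<^sub>R A f x) + (a *\<^sub>R g x + b *\<^sub>R A g x))" if "sqi M f" "sqi M g" for f g
    using rlin_add[OF assms that] unfolding aeq_def
    by (rule eventually_mono) (simp add: algebra_simps)
  have 3: "aeq M (\<lambda>x. a *\<^sub>R (r *\<^sub>R f x) + b *\<^sub>R A (\<lambda>x. r *\<^sub>R f x) x)
     (\<lambda>x. r *\<^sub>R (a *\<^sub>R f x + b *\<^sub>R A f x))" if "sqi M f" for f r
    using rlin_scale[OF assms that, of r] unfolding aeq_def
    by (rule eventually_mono) (simp add: algebra_simps)
  have 4: "sqrt (qn M (\<lambda>x. a *\<^sub>R f x + b *\<^sub>R A f x)) \<le> (\<bar>a\<bar> + \<bar>b\<bar> * C) * sqrt (qn M f)"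
    if f: "sqi M f" for f
  proof -
    have "sqrt (qn M (\<lambda>x. a *\<^sub>R f x + b *\<^sub>R A f x)) \<le> sqrt (qn M (\<lambda>x. a *\<^sub>R f x)) + sqrt (qn M (\<lambda>x. b *\<^sub>R A f x))"
      by (rule qn_triangle[OF sqi_scaleR[OF f] sqi_scaleR[OF rlin_sqi[OF assms f]]])
    also have "\<dots> = \<bar>a\<bar> * sqrt (qn M f) + \<bar>b\<bar> * sqrt (qn M (A f))"
      by (simp add: qn_scale real_sqrt_mult)
    also have "\<dots> \<le> \<bar>a\<bar> * sqrt (qn M f) + \<bar>b\<bar> * (C * sqrt (qn M f))"
      using C(2)[OF f] by (intro add_left_mono mult_left_mono) auto
    finally show ?thesis by (simp add: algebra_simps)
  qed
  show ?thesis unfolding rlin_def using 1 2 3 4 by (auto simp: scaleR_add_right)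
qed

lemma symop_comb:
  fixes A :: "('g \<Rightarrow> complex^'r::finite^'s::finite) \<Rightarrow> ('g \<Rightarrow> complex^'r^'s)"
  assumes "rlin M A" "symop M A"
  shows "symop M (\<lambda>f x. a *\<^sub>R f x + b *\<^sub>R A f x)"
  unfolding symop_def
proof (intro allI impI)
  fix f g :: "'g \<Rightarrow> complex^'r^'s" assume f: "sqi M f" and g: "sqi M g"
  have Af: "sqi M (A f)" and Ag: "sqi M (A g)" using rlin_sqi[OF assms(1)] f g by auto
  have "rip M (\<lambda>x. a *\<^sub>R f x + b *\<^sub>R A f x) g = a * rip M f g + b * rip M (A f) g"
    using rip_add_left[OF sqi_scaleR[OF f] sqi_scaleR[OF Af] g] by (simp add: rip_scale_left)
  also have "rip M (A f) g = rip M f (A g)" using assms(2) f g by (simp add: symop_def)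
  also have "a * rip M f g + b * rip M f (A g) = rip M f (\<lambda>x. a *\<^sub>R g x + b *\<^sub>R A g x)"
    using rip_add_right[OF sqi_scaleR[OF g] sqi_scaleR[OF Ag] f] by (simp add: rip_scale_right)
  finally show "rip M (\<lambda>x. a *\<^sub>R f x + b *\<^sub>R A f x) g = rip M f (\<lambda>x. a *\<^sub>R g x + b *\<^sub>R A g x)" .
qed

lemma blo_id_plus:
  fixes A :: "('g \<Rightarrow> complex^'r::finite^'s::finite) \<Rightarrow> ('g \<Rightarrow> complex^'r^'s)"
  assumes blo: "bounded_linear_op M A"
  shows "bounded_linear_op M (\<lambda>f x. f x + A f x)"
proof -
  have R: "rlin M A" by (rule blo_rlin[OF blo])
  obtain C where C: "C > 0" "\<And>f::'g \<Rightarrow> complex^'r^'s. sqi M f \<Longrightarrow> sqrt (qn M (A f)) \<le> C * sqrt (qn M f)"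
    using rlin_bound[OF R] by blast
  have 1: "\<forall>f\<in>L2 M. (\<lambda>x. f x + A f x) \<in> L2 M"
  proof
    fix f :: "'g \<Rightarrow> complex^'r^'s" assume "f \<in> L2 M"
    then have f: "sqi M f" by (simp add: L2_sqi)
    show "(\<lambda>x. f x + A f x) \<in> L2 M" using sqi_add[OF f rlin_sqi[OF R f]] by (simp add: L2_sqi)
  qed
  have 2: "\<forall>f\<in>L2 M. \<forall>g\<in>L2 M. aeq M (\<lambda>x. (f x + g x) + A (\<lambda>x. f x + g x) x) (\<lambda>x. (f x + A f x) + (g x + A g x))"
  proof (intro ballI)
    fix f g :: "'g \<Rightarrow> complex^'r^'s" assume "f \<in> L2 M" "g \<in> L2 M"
    then have "aeq M (A (\<lambda>x. f x + g x)) (\<lambda>x. A f x + A g x)" using blo by (simp add: bounded_linear_op_def)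
    then show "aeq M (\<lambda>x. (f x + g x) + A (\<lambda>x. f x + g x) x) (\<lambda>x. (f x + A f x) + (g x + A g x))"
      unfolding aeq_def by (rule eventually_mono) (simp add: algebra_simps)
  qed
  have 3: "\<forall>f\<in>L2 M. \<forall>c. aeq M (\<lambda>x. csmult c (f x) + A (\<lambda>x. csmult c (f x)) x) (\<lambda>x. csmult c (f x + A f x))"
  proof (intro ballI allI)
    fix f :: "'g \<Rightarrow> complex^'r^'s" and c assume "f \<in> L2 M"
    then have "aeq M (A (\<lambda>x. csmult c (f x))) (\<lambda>x. csmult c (A f x))" using blo by (simp add: bounded_linear_op_def)
    then show "aeq M (\<lambda>x. csmult c (f x) + A (\<lambda>x. csmult c (f x)) x) (\<lambda>x. csmult c (f x + A f x))"
      unfolding aeq_def by (rule eventually_mono) (simp add: csmult_add)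
  qed
  have 4: "\<forall>f\<in>L2 M. L2norm M (\<lambda>x. f x + A f x) \<le> (1 + C) * L2norm M f"
  proof
    fix f :: "'g \<Rightarrow> complex^'r^'s" assume "f \<in> L2 M"
    then have f: "sqi M f" by (simp add: L2_sqi)
    have "sqrt (qn M (\<lambda>x. f x + A f x)) \<le> sqrt (qn M f) + sqrt (qn M (A f))"
      by (rule qn_triangle[OF f rlin_sqi[OF R f]])
    also have "\<dots> \<le> sqrt (qn M f) + C * sqrt (qn M f)" using C(2)[OF f] by simp
    finally show "L2norm M (\<lambda>x. f x + A f x) \<le> (1 + C) * L2norm M f"
      by (simp add: L2norm_qn algebra_simps)
  qed
  show ?thesis unfolding bounded_linear_op_def using 1 2 3 4 by blast
qed

lemma inj_id_plus:
  fixes A :: "('g \<Rightarrow> complex^'r::finite^'s::finite) \<Rightarrow> ('g \<Rightarrow> complex^'r^'s)"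
  assumes R: "rlin M A" and pos: "posop M A"
    and f: "sqi M f" and g: "sqi M g" and eq: "aeq M (\<lambda>x. f x + A f x) (\<lambda>x. g x + A g x)"
  shows "aeq M f g"
proof -
  define h where "h = (\<lambda>x. f x - g x)"
  have h: "sqi M h" unfolding h_def by (rule sqi_diff[OF f g])
  have Ah: "aeq M (A h) (\<lambda>x. A f x - A g x)" unfolding h_def by (rule rlin_diff[OF R f g])
  have hx: "\<And>x. h x = f x - g x" by (simp add: h_def)
  have z: "aeq M (\<lambda>x. h x + A h x) (\<lambda>x. 0)"
    using Ah eq unfolding aeq_def by eventually_elim (simp only: hx, simp add: algebra_simps)
  have s1: "sqi M (\<lambda>x. h x + A h x)" by (rule sqi_add[OF h rlin_sqi[OF R h]])
  have "rip M (\<lambda>x. h x + A h x) h = rip M (\<lambda>x. 0) h"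
    by (rule rip_aeq_left[OF s1 sqi_zero h z])
  also have "\<dots> = 0" by (simp add: rip_def)
  finally have "qn M h + rip M (A h) h = 0"
    using rip_add_left[OF h rlin_sqi[OF R h] h] by (simp add: rip_self)
  moreover have "rip M (A h) h \<ge> 0" using pos h by (simp add: posop_def)
  ultimately have "qn M h = 0" using qn_nonneg[of M h] by linarith
  then have "AE x in M. h x = 0" using qn_zero_iff[OF h] by simp
  then show ?thesis unfolding aeq_def h_def by (rule eventually_mono) simp
qed



lemma surj_id_plus:
  fixes A :: "('g \<Rightarrow> complex^'r::finite^'s::finite) \<Rightarrow> ('g \<Rightarrow> complex^'r^'s)"
  assumes R: "rlin M A" and sym: "symop M A" and pos: "posop M A" and g: "sqi M g"
  shows "\<exists>f. sqi M f \<and> aeq M (\<lambda>x. f x + A f x) g"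
proof -
  obtain C where C: "C > 0" "\<And>f::'g \<Rightarrow> complex^'r^'s. sqi M f \<Longrightarrow> sqrt (qn M (A f)) \<le> C * sqrt (qn M f)"
    using rlin_bound[OF R] by blast
  define c where "c = 1 + C"
  define q where "q = C / c"
  have c: "c > 0" "c \<noteq> 0" using C by (auto simp: c_def)
  have q: "0 < q" "q < 1" using C by (auto simp: q_def c_def)
  have q1: "1 - q = 1 / c" using C by (simp add: q_def c_def field_simps)
  define B where "B = (\<lambda>f x. q *\<^sub>R f x + (- 1 / c) *\<^sub>R A f x)"
  have RB: "rlin M B" unfolding B_def by (rule rlin_comb[OF R])
  have SB: "symop M B" unfolding B_def by (rule symop_comb[OF R sym])
  have ripB: "rip M (B w) w = q * qn M w - (1 / c) * rip M (A w) w" if w: "sqi M w" for w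
  proof -
    have "rip M (B w) w = rip M (\<lambda>x. q *\<^sub>R w x) w + rip M (\<lambda>x. (- 1 / c) *\<^sub>R A w x) w"
      unfolding B_def by (rule rip_add_left[OF sqi_scaleR[OF w] sqi_scaleR[OF rlin_sqi[OF R w]] w])
    then show ?thesis unfolding rip_scale_left rip_self by simp
  qed
  have upB: "rip M (B w) w \<le> q * qn M w" if w: "sqi M w" for w
    using ripB[OF w] pos w c by (simp add: posop_def)
  have PB: "posop M B" unfolding posop_def
  proof (intro allI impI)
    fix w :: "'g \<Rightarrow> complex^'r^'s" assume w: "sqi M w"
    have "rip M (A w) w \<le> sqrt (qn M (A w)) * sqrt (qn M w)" by (rule rip_CS'[OF rlin_sqi[OF R w] w])
    also have "\<dots> \<le> C * sqrt (qn M w) * sqrt (qn M w)"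
      using C(2)[OF w] by (intro mult_right_mono) (auto simp: qn_nonneg)
    also have "\<dots> = C * qn M w" using qn_nonneg[of M w] by (simp add: mult.assoc)
    finally have "(1 / c) * rip M (A w) w \<le> (1 / c) * (C * qn M w)"
      using c by (intro mult_left_mono) auto
    also have "\<dots> = q * qn M w" by (simp add: q_def)
    finally show "0 \<le> rip M (B w) w" using ripB[OF w] by simp
  qed
  have contr: "sqrt (qn M (B w)) \<le> q * sqrt (qn M w)" if w: "sqi M w" for w
  proof -
    have "qn M (B w) \<le> q * rip M (B w) w" by (rule posq[OF RB SB PB upB q(1) w])
    also have "\<dots> \<le> q * (q * qn M w)" using upB[OF w] q by (intro mult_left_mono) auto
    moreover have "(q * sqrt (qn M w))\<^sup>2 = q * (q * qn M w)"
      using qn_nonneg[of M w] by (simp add: power_mult_distrib power2_eq_square[of q] mult.assoc)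
    ultimately have "qn M (B w) \<le> (q * sqrt (qn M w))\<^sup>2" by simp
    then have "sqrt (qn M (B w)) \<le> sqrt ((q * sqrt (qn M w))\<^sup>2)" by (rule real_sqrt_le_mono)
    also have "\<dots> = q * sqrt (qn M w)" using q qn_nonneg[of M w] by simp
    finally show ?thesis .
  qed
  have contr2: "sqrt (qn M (\<lambda>x. B u x - B v x)) \<le> q * sqrt (qn M (\<lambda>x. u x - v x))"
    if u: "sqi M u" and v: "sqi M v" for u v
  proof -
    have "qn M (\<lambda>x. B u x - B v x) = qn M (B (\<lambda>x. u x - v x))"
      by (rule qn_aeq[OF sqi_diff[OF rlin_sqi[OF RB u] rlin_sqi[OF RB v]] rlin_sqi[OF RB sqi_diff[OF u v]]
          aeq_sym[OF rlin_diff[OF RB u v]]])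
    then show ?thesis using contr[OF sqi_diff[OF u v]] by simp
  qed
  define s where "s = rec_nat (\<lambda>x. 0) (\<lambda>n sn x. B sn x + (1 / c) *\<^sub>R g x)"
  have s0: "s 0 = (\<lambda>x. 0)" by (simp add: s_def)
  have sS: "s (Suc n) = (\<lambda>x. B (s n) x + (1 / c) *\<^sub>R g x)" for n by (simp add: s_def)
  have ssqi: "sqi M (s n)" for n
    by (induction n) (simp_all add: s0 sS sqi_zero sqi_add sqi_scaleR g rlin_sqi[OF RB])
  have sdiff: "sqrt (qn M (\<lambda>x. s (Suc (Suc n)) x - s (Suc n) x)) \<le> q * sqrt (qn M (\<lambda>x. s (Suc n) x - s n x))" for n
    using contr2[OF ssqi ssqi, of "Suc n" n] by (simp add: sS)
  define K where "K = sqrt (qn M (\<lambda>x. s (Suc 0) x - s 0 x))"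
  have step: "sqrt (qn M (\<lambda>x. s (Suc n) x - s n x)) \<le> K * q ^ n" for n
  proof (induction n)
    case 0 then show ?case by (simp add: K_def)
  next
    case (Suc n)
    have "sqrt (qn M (\<lambda>x. s (Suc (Suc n)) x - s (Suc n) x)) \<le> q * sqrt (qn M (\<lambda>x. s (Suc n) x - s n x))"
      by (rule sdiff)
    also have "\<dots> \<le> q * (K * q ^ n)" using Suc q by (intro mult_left_mono) auto
    finally show ?case by (simp add: algebra_simps)
  qed
  obtain f where f: "sqi M f" and lim: "(\<lambda>n. qn M (\<lambda>x. s n x - f x)) \<longlonglongrightarrow> 0"
    using L2_complete[OF ssqi _ q(2) step] q by auto
  define \<Phi> where "\<Phi> = (\<lambda>x. B f x + (1 / c) *\<^sub>R g x)"
  have Phi: "sqi M \<Phi>" unfolding \<Phi>_def by (intro sqi_add sqi_scaleR g rlin_sqi[OF RB f])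
  have bnd: "sqrt (qn M (\<lambda>x. \<Phi> x - f x)) \<le> q * sqrt (qn M (\<lambda>x. s n x - f x)) + sqrt (qn M (\<lambda>x. s (Suc n) x - f x))" for n
  proof -
    have "sqrt (qn M (\<lambda>x. \<Phi> x - f x)) \<le> sqrt (qn M (\<lambda>x. \<Phi> x - s (Suc n) x)) + sqrt (qn M (\<lambda>x. s (Suc n) x - f x))"
      by (rule qn_triangle_diff[OF Phi ssqi f])
    also have "qn M (\<lambda>x. \<Phi> x - s (Suc n) x) = qn M (\<lambda>x. B f x - B (s n) x)"
      by (simp add: \<Phi>_def sS)
    also have "sqrt \<dots> \<le> q * sqrt (qn M (\<lambda>x. f x - s n x))" by (rule contr2[OF f ssqi])
    also have "qn M (\<lambda>x. f x - s n x) = qn M (\<lambda>x. s n x - f x)"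
      using qn_uminus[of M "\<lambda>x. s n x - f x"] by simp
    finally show ?thesis by simp
  qed
  have "(\<lambda>n. q * sqrt (qn M (\<lambda>x. s n x - f x)) + sqrt (qn M (\<lambda>x. s (Suc n) x - f x))) \<longlonglongrightarrow> q * sqrt 0 + sqrt 0"
    using lim LIMSEQ_Suc[OF lim] by (intro tendsto_intros)
  then have "sqrt (qn M (\<lambda>x. \<Phi> x - f x)) \<le> q * sqrt 0 + sqrt 0"
    by (rule LIMSEQ_le_const) (use bnd in blast)
  then have "qn M (\<lambda>x. \<Phi> x - f x) = 0" using qn_nonneg[of M "\<lambda>x. \<Phi> x - f x"] by simp
  then have AEz: "AE x in M. \<Phi> x - f x = 0" using qn_zero_iff[OF sqi_diff[OF Phi f]] by simp
  have "aeq M (\<lambda>x. f x + A f x) g"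
    unfolding aeq_def using AEz
  proof (rule eventually_mono)
    fix x assume "\<Phi> x - f x = 0"
    then have e: "q *\<^sub>R f x + (- 1 / c) *\<^sub>R A f x + (1 / c) *\<^sub>R g x = f x"
      by (simp add: \<Phi>_def B_def)
    have "(1 / c) *\<^sub>R g x = (1 - q) *\<^sub>R f x + (1 / c) *\<^sub>R A f x"
      using e by (simp add: algebra_simps)
    also have "\<dots> = (1 / c) *\<^sub>R (f x + A f x)" by (simp add: q1 scaleR_add_right)
    finally have X: "(1 / c) *\<^sub>R g x = (1 / c) *\<^sub>R (f x + A f x)" .
    then show "f x + A f x = g x" using c by auto
  qed
  with f show ?thesis by blast
qed



lemma positive_symop:
  fixes T :: "('g \<Rightarrow> complex^'r::finite^'s::finite) \<Rightarrow> ('g \<Rightarrow> complex^'r^'s)"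
  assumes "bounded_linear_op M T" "positive_op M T"
  shows "symop M T"
  unfolding symop_def
proof (intro allI impI)
  fix f g :: "'g \<Rightarrow> complex^'r^'s" assume f: "sqi M f" and g: "sqi M g"
  have R: "rlin M T" by (rule blo_rlin[OF assms(1)])
  have "ip M (T f) g = ip M f (T g)" using assms(2) f g by (simp add: positive_op_def L2_sqi)
  then have "Re (ip M (T f) g) = Re (ip M f (T g))" by simp
  then show "rip M (T f) g = rip M f (T g)"
    using Re_ip[OF rlin_sqi[OF R f] g] Re_ip[OF f rlin_sqi[OF R g]] by simp
qed

lemma positive_posop:
  fixes T :: "('g \<Rightarrow> complex^'r::finite^'s::finite) \<Rightarrow> ('g \<Rightarrow> complex^'r^'s)"
  assumes "bounded_linear_op M T" "positive_op M T"
  shows "posop M T"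
  unfolding posop_def
proof (intro allI impI)
  fix f :: "'g \<Rightarrow> complex^'r^'s" assume f: "sqi M f"
  have R: "rlin M T" by (rule blo_rlin[OF assms(1)])
  have fL: "f \<in> L2 M" using f by (simp add: L2_sqi)
  have "Re (ip M (T f) f) \<ge> 0" using assms(2) fL unfolding positive_op_def by blast
  then show "rip M (T f) f \<ge> 0" using Re_ip[OF rlin_sqi[OF R f] f] by simp
qed

lemma mip_add_left:
  fixes f g h :: "'a \<Rightarrow> complex^'r::finite^'s::finite"
  assumes f: "sqi M f" and g: "sqi M g" and h: "sqi M h"
  shows "mip M (\<lambda>x. f x + g x) h = mip M f h + mip M g h"
proof -
  have e: "((f x + g x) ** cadj (h x)) $ i $ k = (f x ** cadj (h x)) $ i $ k + (g x ** cadj (h x)) $ i $ k" for x i k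
    unfolding mmult_cadj_entry by (simp add: sum.distrib distrib_right)
  show ?thesis unfolding mip_def vec_eq_iff
    by (simp add: e Bochner_Integration.integral_add[OF mip_entry_int[OF f h] mip_entry_int[OF g h]])
qed

lemma mip_add_right:
  fixes f g h :: "'a \<Rightarrow> complex^'r::finite^'s::finite"
  assumes f: "sqi M f" and g: "sqi M g" and h: "sqi M h"
  shows "mip M h (\<lambda>x. f x + g x) = mip M h f + mip M h g"
proof -
  have e: "(h x ** cadj (f x + g x)) $ i $ k = (h x ** cadj (f x)) $ i $ k + (h x ** cadj (g x)) $ i $ k" for x i k
    unfolding mmult_cadj_entry by (simp add: sum.distrib distrib_left)
  show ?thesis unfolding mip_def vec_eq_iff
    by (simp add: e Bochner_Integration.integral_add[OF mip_entry_int[OF h f] mip_entry_int[OF h g]])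
qed

lemma adjointable_id_plus:
  fixes A :: "('g \<Rightarrow> complex^'r::finite^'s::finite) \<Rightarrow> ('g \<Rightarrow> complex^'r^'s)"
  assumes adj: "adjointable M A" and AL: "\<And>f. sqi M f \<Longrightarrow> sqi M (A f)"
  shows "adjointable M (\<lambda>f x. f x + A f x)"
proof -
  obtain V where V: "\<forall>g\<in>L2 M. V g \<in> L2 M" "\<forall>f\<in>L2 M. \<forall>g\<in>L2 M. mip M (A f) g = mip M f (V g)"
    using adj by (auto simp: adjointable_def)
  show ?thesis unfolding adjointable_def
  proof (intro exI[of _ "\<lambda>g x. g x + V g x"] conjI ballI)
    fix g :: "'g \<Rightarrow> complex^'r^'s" assume "g \<in> L2 M"
    then show "(\<lambda>x. g x + V g x) \<in> L2 M" using V(1) by (simp add: L2_sqi sqi_add)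
  next
    fix f g :: "'g \<Rightarrow> complex^'r^'s" assume f: "f \<in> L2 M" and g: "g \<in> L2 M"
    then have f': "sqi M f" and g': "sqi M g" and Vg: "sqi M (V g)" using V(1) by (auto simp: L2_sqi)
    have "mip M (\<lambda>x. f x + A f x) g = mip M f g + mip M (A f) g"
      by (rule mip_add_left[OF f' AL[OF f'] g'])
    also have "mip M (A f) g = mip M f (V g)" using V(2) f g by blast
    also have "mip M f g + mip M f (V g) = mip M f (\<lambda>x. g x + V g x)"
      by (rule mip_add_right[OF g' Vg f', symmetric])
    finally show "mip M (\<lambda>x. f x + A f x) g = mip M f (\<lambda>x. g x + V g x)" .
  qed
qed

lemma riesz_of:
  fixes A :: "('g \<Rightarrow> complex^'r::finite^'s::finite) \<Rightarrow> ('g \<Rightarrow> complex^'r^'s)"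
    and E :: "nat \<Rightarrow> 'g \<Rightarrow> complex^'r^'s"
  assumes E: "mv_onb M E" and blo: "bounded_linear_op M A" and sym: "symop M A"
    and pos: "posop M A" and adj: "adjointable M A"
  shows "mv_riesz_basis M (\<lambda>k x. E k x + A (E k) x)"
proof -
  have R: "rlin M A" by (rule blo_rlin[OF blo])
  have bij: "bijective_op M (\<lambda>f x. f x + A f x)"
    unfolding bijective_op_def
  proof (intro conjI ballI impI)
    fix f g :: "'g \<Rightarrow> complex^'r^'s"
    assume "f \<in> L2 M" "g \<in> L2 M" "aeq M (\<lambda>x. f x + A f x) (\<lambda>x. g x + A g x)"
    then show "aeq M f g" using inj_id_plus[OF R pos] by (simp add: L2_sqi)
  next
    fix g :: "'g \<Rightarrow> complex^'r^'s" assume "g \<in> L2 M"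
    then obtain f where "sqi M f" "aeq M (\<lambda>x. f x + A f x) g"
      using surj_id_plus[OF R sym pos] by (auto simp: L2_sqi)
    then show "\<exists>f\<in>L2 M. aeq M (\<lambda>x. f x + A f x) g" by (auto simp: L2_sqi)
  qed
  have adj': "adjointable M (\<lambda>f x. f x + A f x)"
    by (rule adjointable_id_plus[OF adj rlin_sqi[OF R]])
  show ?thesis unfolding mv_riesz_basis_def
    using E blo_id_plus[OF blo] bij adj' aeq_refl by blast
qed



lemma rlin_compose:
  fixes A B :: "('g \<Rightarrow> complex^'r::finite^'s::finite) \<Rightarrow> ('g \<Rightarrow> complex^'r^'s)"
  assumes A: "rlin M A" and B: "rlin M B"
  shows "rlin M (\<lambda>f. A (B f))"
proof -
  obtain CA where CA: "CA > 0" "\<And>f::'g \<Rightarrow> complex^'r^'s. sqi M f \<Longrightarrow> sqrt (qn M (A f)) \<le> CA * sqrt (qn M f)"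
    using rlin_bound[OF A] by blast
  obtain CB where CB: "CB > 0" "\<And>f::'g \<Rightarrow> complex^'r^'s. sqi M f \<Longrightarrow> sqrt (qn M (B f)) \<le> CB * sqrt (qn M f)"
    using rlin_bound[OF B] by blast
  have 1: "sqi M (A (B f))" if "sqi M f" for f :: "'g \<Rightarrow> complex^'r^'s"
    using that by (intro rlin_sqi[OF A] rlin_sqi[OF B])
  have 2: "aeq M (A (B (\<lambda>x. f x + g x))) (\<lambda>x. A (B f) x + A (B g) x)"
    if f: "sqi M f" and g: "sqi M g" for f g :: "'g \<Rightarrow> complex^'r^'s"
  proof -
    have "aeq M (A (B (\<lambda>x. f x + g x))) (A (\<lambda>x. B f x + B g x))"
      by (rule rlin_cong[OF A rlin_sqi[OF B sqi_add[OF f g]] sqi_add[OF rlin_sqi[OF B f] rlin_sqi[OF B g]]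
          rlin_add[OF B f g]])
    then show ?thesis using rlin_add[OF A rlin_sqi[OF B f] rlin_sqi[OF B g]] by (rule aeq_trans)
  qed
  have 3: "aeq M (A (B (\<lambda>x. a *\<^sub>R f x))) (\<lambda>x. a *\<^sub>R A (B f) x)"
    if f: "sqi M f" for f :: "'g \<Rightarrow> complex^'r^'s" and a
  proof -
    have "aeq M (A (B (\<lambda>x. a *\<^sub>R f x))) (A (\<lambda>x. a *\<^sub>R B f x))"
      by (rule rlin_cong[OF A rlin_sqi[OF B sqi_scaleR[OF f]] sqi_scaleR[OF rlin_sqi[OF B f]]
          rlin_scale[OF B f]])
    then show ?thesis using rlin_scale[OF A rlin_sqi[OF B f]] by (rule aeq_trans)
  qed
  have 4: "sqrt (qn M (A (B f))) \<le> (CA * CB) * sqrt (qn M f)" if f: "sqi M f" for f :: "'g \<Rightarrow> complex^'r^'s"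
  proof -
    have "sqrt (qn M (A (B f))) \<le> CA * sqrt (qn M (B f))" by (rule CA(2)[OF rlin_sqi[OF B f]])
    also have "\<dots> \<le> CA * (CB * sqrt (qn M f))" using CB(2)[OF f] CA(1) by (intro mult_left_mono) auto
    finally show ?thesis by (simp add: mult.assoc)
  qed
  show ?thesis unfolding rlin_def using 1 2 3 4 by blast
qed

lemma rlin_minus:
  fixes A B :: "('g \<Rightarrow> complex^'r::finite^'s::finite) \<Rightarrow> ('g \<Rightarrow> complex^'r^'s)"
  assumes A: "rlin M A" and B: "rlin M B"
  shows "rlin M (\<lambda>f x. A f x - B f x)"
proof -
  obtain CA where CA: "CA > 0" "\<And>f::'g \<Rightarrow> complex^'r^'s. sqi M f \<Longrightarrow> sqrt (qn M (A f)) \<le> CA * sqrt (qn M f)"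
    using rlin_bound[OF A] by blast
  obtain CB where CB: "CB > 0" "\<And>f::'g \<Rightarrow> complex^'r^'s. sqi M f \<Longrightarrow> sqrt (qn M (B f)) \<le> CB * sqrt (qn M f)"
    using rlin_bound[OF B] by blast
  have 1: "sqi M (\<lambda>x. A f x - B f x)" if "sqi M f" for f :: "'g \<Rightarrow> complex^'r^'s"
    using that by (intro sqi_diff rlin_sqi[OF A] rlin_sqi[OF B])
  have 2: "aeq M (\<lambda>x. A (\<lambda>x. f x + g x) x - B (\<lambda>x. f x + g x) x) (\<lambda>x. (A f x - B f x) + (A g x - B g x))"
    if f: "sqi M f" and g: "sqi M g" for f g :: "'g \<Rightarrow> complex^'r^'s"
    using rlin_add[OF A f g] rlin_add[OF B f g] unfolding aeq_def
    by eventually_elim (simp add: algebra_simps)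
  have 3: "aeq M (\<lambda>x. A (\<lambda>x. a *\<^sub>R f x) x - B (\<lambda>x. a *\<^sub>R f x) x) (\<lambda>x. a *\<^sub>R (A f x - B f x))"
    if f: "sqi M f" for f :: "'g \<Rightarrow> complex^'r^'s" and a
    using rlin_scale[OF A f, of a] rlin_scale[OF B f, of a] unfolding aeq_def
    by eventually_elim (simp add: algebra_simps)
  have 4: "sqrt (qn M (\<lambda>x. A f x - B f x)) \<le> (CA + CB) * sqrt (qn M f)" if f: "sqi M f" for f :: "'g \<Rightarrow> complex^'r^'s"
  proof -
    have "sqrt (qn M (\<lambda>x. A f x + - B f x)) \<le> sqrt (qn M (A f)) + sqrt (qn M (\<lambda>x. - B f x))"
      by (rule qn_triangle[OF rlin_sqi[OF A f] sqi_uminus[OF rlin_sqi[OF B f]]])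
    also have "\<dots> \<le> CA * sqrt (qn M f) + CB * sqrt (qn M f)"
      using CA(2)[OF f] CB(2)[OF f] by (simp add: qn_uminus)
    finally show ?thesis by (simp add: algebra_simps)
  qed
  show ?thesis unfolding rlin_def using 1 2 3 4 by blast
qed

lemma blo_sum:
  fixes T S :: "('g \<Rightarrow> complex^'r::finite^'s::finite) \<Rightarrow> ('g \<Rightarrow> complex^'r^'s)"
  assumes T: "bounded_linear_op M T" and S: "bounded_linear_op M S"
  shows "bounded_linear_op M (\<lambda>f x. T f x + S f x)"
proof -
  have RT: "rlin M T" and RS: "rlin M S" using blo_rlin T S by auto
  obtain CT where CT: "CT > 0" "\<And>f::'g \<Rightarrow> complex^'r^'s. sqi M f \<Longrightarrow> sqrt (qn M (T f)) \<le> CT * sqrt (qn M f)"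
    using rlin_bound[OF RT] by blast
  obtain CS where CS: "CS > 0" "\<And>f::'g \<Rightarrow> complex^'r^'s. sqi M f \<Longrightarrow> sqrt (qn M (S f)) \<le> CS * sqrt (qn M f)"
    using rlin_bound[OF RS] by blast
  have 1: "\<forall>f\<in>L2 M. (\<lambda>x. T f x + S f x) \<in> L2 M"
  proof
    fix f :: "'g \<Rightarrow> complex^'r^'s" assume "f \<in> L2 M"
    then have f: "sqi M f" by (simp add: L2_sqi)
    show "(\<lambda>x. T f x + S f x) \<in> L2 M" using sqi_add[OF rlin_sqi[OF RT f] rlin_sqi[OF RS f]] by (simp add: L2_sqi)
  qed
  have 2: "\<forall>f\<in>L2 M. \<forall>g\<in>L2 M. aeq M (\<lambda>x. T (\<lambda>x. f x + g x) x + S (\<lambda>x. f x + g x) x) (\<lambda>x. (T f x + S f x) + (T g x + S g x))"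
  proof (intro ballI)
    fix f g :: "'g \<Rightarrow> complex^'r^'s" assume "f \<in> L2 M" "g \<in> L2 M"
    then have "aeq M (T (\<lambda>x. f x + g x)) (\<lambda>x. T f x + T g x)" "aeq M (S (\<lambda>x. f x + g x)) (\<lambda>x. S f x + S g x)"
      using T S by (auto simp: bounded_linear_op_def)
    then show "aeq M (\<lambda>x. T (\<lambda>x. f x + g x) x + S (\<lambda>x. f x + g x) x) (\<lambda>x. (T f x + S f x) + (T g x + S g x))"
      unfolding aeq_def by eventually_elim (simp add: algebra_simps)
  qed
  have 3: "\<forall>f\<in>L2 M. \<forall>c. aeq M (\<lambda>x. T (\<lambda>x. csmult c (f x)) x + S (\<lambda>x. csmult c (f x)) x) (\<lambda>x. csmult c (T f x + S f x))"
  proof (intro ballI allI)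
    fix f :: "'g \<Rightarrow> complex^'r^'s" and c assume "f \<in> L2 M"
    then have "aeq M (T (\<lambda>x. csmult c (f x))) (\<lambda>x. csmult c (T f x))" "aeq M (S (\<lambda>x. csmult c (f x))) (\<lambda>x. csmult c (S f x))"
      using T S by (auto simp: bounded_linear_op_def)
    then show "aeq M (\<lambda>x. T (\<lambda>x. csmult c (f x)) x + S (\<lambda>x. csmult c (f x)) x) (\<lambda>x. csmult c (T f x + S f x))"
      unfolding aeq_def by eventually_elim (simp add: csmult_add)
  qed
  have 4: "\<forall>f\<in>L2 M. L2norm M (\<lambda>x. T f x + S f x) \<le> (CT + CS) * L2norm M f"
  proof
    fix f :: "'g \<Rightarrow> complex^'r^'s" assume "f \<in> L2 M"
    then have f: "sqi M f" by (simp add: L2_sqi)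
    have "sqrt (qn M (\<lambda>x. T f x + S f x)) \<le> sqrt (qn M (T f)) + sqrt (qn M (S f))"
      by (rule qn_triangle[OF rlin_sqi[OF RT f] rlin_sqi[OF RS f]])
    also have "\<dots> \<le> CT * sqrt (qn M f) + CS * sqrt (qn M f)" using CT(2)[OF f] CS(2)[OF f] by simp
    finally show "L2norm M (\<lambda>x. T f x + S f x) \<le> (CT + CS) * L2norm M f"
      by (simp add: L2norm_qn algebra_simps)
  qed
  show ?thesis unfolding bounded_linear_op_def using 1 2 3 4 by blast
qed

lemma blo_comp:
  fixes T S :: "('g \<Rightarrow> complex^'r::finite^'s::finite) \<Rightarrow> ('g \<Rightarrow> complex^'r^'s)"
  assumes T: "bounded_linear_op M T" and S: "bounded_linear_op M S"
  shows "bounded_linear_op M (\<lambda>f. T (S f))"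
proof -
  have RT: "rlin M T" and RS: "rlin M S" using blo_rlin T S by auto
  have R: "rlin M (\<lambda>f. T (S f))" by (rule rlin_compose[OF RT RS])
  have 3: "\<forall>f\<in>L2 M. \<forall>c. aeq M (T (S (\<lambda>x. csmult c (f x)))) (\<lambda>x. csmult c (T (S f) x))"
  proof (intro ballI allI)
    fix f :: "'g \<Rightarrow> complex^'r^'s" and c assume fL: "f \<in> L2 M"
    then have f: "sqi M f" by (simp add: L2_sqi)
    have SfL: "S f \<in> L2 M" using S fL by (simp add: bounded_linear_op_def)
    have "aeq M (S (\<lambda>x. csmult c (f x))) (\<lambda>x. csmult c (S f x))" using S fL by (simp add: bounded_linear_op_def)
    then have "aeq M (T (S (\<lambda>x. csmult c (f x)))) (T (\<lambda>x. csmult c (S f x)))"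
      by (rule rlin_cong[OF RT rlin_sqi[OF RS sqi_csmult[OF f]] sqi_csmult[OF rlin_sqi[OF RS f]]])
    moreover have "aeq M (T (\<lambda>x. csmult c (S f x))) (\<lambda>x. csmult c (T (S f) x))"
      using T SfL by (simp add: bounded_linear_op_def)
    ultimately show "aeq M (T (S (\<lambda>x. csmult c (f x)))) (\<lambda>x. csmult c (T (S f) x))" by (rule aeq_trans)
  qed
  have 1: "\<forall>f\<in>L2 M. T (S f) \<in> L2 M" using rlin_sqi[OF R] by (simp add: L2_sqi)
  have 2: "\<forall>f\<in>L2 M. \<forall>g\<in>L2 M. aeq M (T (S (\<lambda>x. f x + g x))) (\<lambda>x. T (S f) x + T (S g) x)"
    using rlin_add[OF R] by (simp add: L2_sqi)
  obtain C where C: "C > 0" "\<And>f::'g \<Rightarrow> complex^'r^'s. sqi M f \<Longrightarrow> sqrt (qn M (T (S f))) \<le> C * sqrt (qn M f)"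
    using rlin_bound[OF R] by blast
  have 4: "\<forall>f\<in>L2 M. L2norm M (T (S f)) \<le> C * L2norm M f"
    using C(2) by (simp add: L2_sqi L2norm_qn)
  show ?thesis unfolding bounded_linear_op_def using 1 2 3 4 by blast
qed

lemma adjointable_sum:
  fixes T S :: "('g \<Rightarrow> complex^'r::finite^'s::finite) \<Rightarrow> ('g \<Rightarrow> complex^'r^'s)"
  assumes T: "adjointable M T" "\<And>f. sqi M f \<Longrightarrow> sqi M (T f)"
    and S: "adjointable M S" "\<And>f. sqi M f \<Longrightarrow> sqi M (S f)"
  shows "adjointable M (\<lambda>f x. T f x + S f x)"
proof -
  obtain V where V: "\<forall>g\<in>L2 M. V g \<in> L2 M" "\<forall>f\<in>L2 M. \<forall>g\<in>L2 M. mip M (T f) g = mip M f (V g)"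
    using T(1) by (auto simp: adjointable_def)
  obtain W where W: "\<forall>g\<in>L2 M. W g \<in> L2 M" "\<forall>f\<in>L2 M. \<forall>g\<in>L2 M. mip M (S f) g = mip M f (W g)"
    using S(1) by (auto simp: adjointable_def)
  show ?thesis unfolding adjointable_def
  proof (intro exI[of _ "\<lambda>g x. V g x + W g x"] conjI ballI)
    fix g :: "'g \<Rightarrow> complex^'r^'s" assume "g \<in> L2 M"
    then show "(\<lambda>x. V g x + W g x) \<in> L2 M" using V(1) W(1) by (simp add: L2_sqi sqi_add)
  next
    fix f g :: "'g \<Rightarrow> complex^'r^'s" assume f: "f \<in> L2 M" and g: "g \<in> L2 M"
    then have f': "sqi M f" and g': "sqi M g" and Vg: "sqi M (V g)" and Wg: "sqi M (W g)"
      using V(1) W(1) by (auto simp: L2_sqi)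
    have "mip M (\<lambda>x. T f x + S f x) g = mip M (T f) g + mip M (S f) g"
      by (rule mip_add_left[OF T(2)[OF f'] S(2)[OF f'] g'])
    also have "\<dots> = mip M f (V g) + mip M f (W g)" using V(2) W(2) f g by simp
    also have "\<dots> = mip M f (\<lambda>x. V g x + W g x)"
      by (rule mip_add_right[OF Vg Wg f', symmetric])
    finally show "mip M (\<lambda>x. T f x + S f x) g = mip M f (\<lambda>x. V g x + W g x)" .
  qed
qed

lemma adjointable_comp:
  fixes T S :: "('g \<Rightarrow> complex^'r::finite^'s::finite) \<Rightarrow> ('g \<Rightarrow> complex^'r^'s)"
  assumes T: "adjointable M T"
    and S: "adjointable M S" "\<And>f. f \<in> L2 M \<Longrightarrow> S f \<in> L2 M"
  shows "adjointable M (\<lambda>f. T (S f))"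
proof -
  obtain V where V: "\<forall>g\<in>L2 M. V g \<in> L2 M" "\<forall>f\<in>L2 M. \<forall>g\<in>L2 M. mip M (T f) g = mip M f (V g)"
    using T(1) by (auto simp: adjointable_def)
  obtain W where W: "\<forall>g\<in>L2 M. W g \<in> L2 M" "\<forall>f\<in>L2 M. \<forall>g\<in>L2 M. mip M (S f) g = mip M f (W g)"
    using S(1) by (auto simp: adjointable_def)
  show ?thesis unfolding adjointable_def
  proof (intro exI[of _ "\<lambda>g. W (V g)"] conjI ballI)
    fix g :: "'g \<Rightarrow> complex^'r^'s" assume "g \<in> L2 M"
    then show "W (V g) \<in> L2 M" using V(1) W(1) by simp
  next
    fix f g :: "'g \<Rightarrow> complex^'r^'s" assume f: "f \<in> L2 M" and g: "g \<in> L2 M"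
    have "mip M (T (S f)) g = mip M (S f) (V g)" using V(2) S(2)[OF f] g by simp
    also have "\<dots> = mip M f (W (V g))" using W(2) f V(1) g by simp
    finally show "mip M (T (S f)) g = mip M f (W (V g))" .
  qed
qed

lemma symop_sum:
  fixes T S :: "('g \<Rightarrow> complex^'r::finite^'s::finite) \<Rightarrow> ('g \<Rightarrow> complex^'r^'s)"
  assumes "rlin M T" "rlin M S" "symop M T" "symop M S"
  shows "symop M (\<lambda>f x. T f x + S f x)"
  unfolding symop_def
proof (intro allI impI)
  fix f g :: "'g \<Rightarrow> complex^'r^'s" assume f: "sqi M f" and g: "sqi M g"
  have "rip M (\<lambda>x. T f x + S f x) g = rip M (T f) g + rip M (S f) g"
    by (rule rip_add_left[OF rlin_sqi[OF assms(1) f] rlin_sqi[OF assms(2) f] g])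
  also have "\<dots> = rip M f (T g) + rip M f (S g)" using assms(3,4) f g by (simp add: symop_def)
  also have "\<dots> = rip M f (\<lambda>x. T g x + S g x)"
    by (rule rip_add_right[OF rlin_sqi[OF assms(1) g] rlin_sqi[OF assms(2) g] f, symmetric])
  finally show "rip M (\<lambda>x. T f x + S f x) g = rip M f (\<lambda>x. T g x + S g x)" .
qed

lemma posop_sum:
  fixes T S :: "('g \<Rightarrow> complex^'r::finite^'s::finite) \<Rightarrow> ('g \<Rightarrow> complex^'r^'s)"
  assumes "rlin M T" "rlin M S" "posop M T" "posop M S"
  shows "posop M (\<lambda>f x. T f x + S f x)"
  unfolding posop_def
proof (intro allI impI)
  fix f :: "'g \<Rightarrow> complex^'r^'s" assume f: "sqi M f"
  have "rip M (\<lambda>x. T f x + S f x) f = rip M (T f) f + rip M (S f) f"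
    by (rule rip_add_left[OF rlin_sqi[OF assms(1) f] rlin_sqi[OF assms(2) f] f])
  then show "0 \<le> rip M (\<lambda>x. T f x + S f x) f" using assms(3,4) f by (simp add: posop_def)
qed

lemma symop_comp:
  fixes T S :: "('g \<Rightarrow> complex^'r::finite^'s::finite) \<Rightarrow> ('g \<Rightarrow> complex^'r^'s)"
  assumes RT: "rlin M T" and RS: "rlin M S" and "symop M T" "symop M S"
    and comm: "\<And>f. sqi M f \<Longrightarrow> aeq M (T (S f)) (S (T f))"
  shows "symop M (\<lambda>f. T (S f))"
  unfolding symop_def
proof (intro allI impI)
  fix f g :: "'g \<Rightarrow> complex^'r^'s" assume f: "sqi M f" and g: "sqi M g"
  have "rip M (T (S f)) g = rip M (S f) (T g)" using assms(3) rlin_sqi[OF RS f] g by (simp add: symop_def)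
  also have "\<dots> = rip M f (S (T g))" using assms(4) rlin_sqi[OF RT g] f by (simp add: symop_def)
  also have "\<dots> = rip M f (T (S g))"
    by (rule rip_aeq_right[OF rlin_sqi[OF RS rlin_sqi[OF RT g]] rlin_sqi[OF RT rlin_sqi[OF RS g]] f
          aeq_sym[OF comm[OF g]]])
  finally show "rip M (T (S f)) g = rip M f (T (S g))" .
qed



lemma posop_comp:
  fixes T S :: "('g \<Rightarrow> complex^'r::finite^'s::finite) \<Rightarrow> ('g \<Rightarrow> complex^'r^'s)"
  assumes RT: "rlin M T" and RS: "rlin M S" and ST: "symop M T" and SS: "symop M S"
    and PT: "posop M T" and PS: "posop M S"
    and comm: "\<And>f. sqi M f \<Longrightarrow> aeq M (T (S f)) (S (T f))"
  shows "posop M (\<lambda>f. T (S f))"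
proof -
  obtain CT where CT: "CT > 0" "\<And>f::'g \<Rightarrow> complex^'r^'s. sqi M f \<Longrightarrow> sqrt (qn M (T f)) \<le> CT * sqrt (qn M f)"
    using rlin_bound[OF RT] by blast
  obtain CS where CS: "CS > 0" "\<And>f::'g \<Rightarrow> complex^'r^'s. sqi M f \<Longrightarrow> sqrt (qn M (S f)) \<le> CS * sqrt (qn M f)"
    using rlin_bound[OF RS] by blast
  define P :: "nat \<Rightarrow> ('g \<Rightarrow> complex^'r^'s) \<Rightarrow> ('g \<Rightarrow> complex^'r^'s)"
    where "P = rec_nat (\<lambda>f x. (1 / CT) *\<^sub>R T f x) (\<lambda>n Q f x. Q f x - Q (Q f) x)"
  have P0: "P 0 = (\<lambda>f x. (1 / CT) *\<^sub>R T f x)" by (simp add: P_def)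
  have PSuc: "P (Suc n) = (\<lambda>f x. P n f x - P n (P n f) x)" for n by (simp add: P_def)
  have inv: "rlin M (P n) \<and> symop M (P n) \<and> posop M (P n) \<and> (\<forall>w. sqi M w \<longrightarrow> rip M (P n w) w \<le> qn M w)
      \<and> (\<forall>w. sqi M w \<longrightarrow> aeq M (S (P n w)) (P n (S w)))" for n
  proof (induction n)
    case 0
    have e: "(\<lambda>f x. 0 *\<^sub>R f x + (1 / CT) *\<^sub>R T f x) = P 0" by (simp add: P0)
    have R0: "rlin M (P 0)" using rlin_comb[OF RT, of 0 "1 / CT"] by (simp only: e)
    have S0: "symop M (P 0)" using symop_comb[OF RT ST, of 0 "1 / CT"] by (simp only: e)
    have ripP0: "rip M (P 0 w) w = (1 / CT) * rip M (T w) w" for w by (simp add: P0 rip_scale_left)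
    have Pos0: "posop M (P 0)" unfolding posop_def
    proof (intro allI impI)
      fix w :: "'g \<Rightarrow> complex^'r^'s" assume "sqi M w"
      then have "rip M (T w) w \<ge> 0" using PT by (simp add: posop_def)
      then show "0 \<le> rip M (P 0 w) w" using CT(1) by (simp add: ripP0)
    qed
    have U0: "\<forall>w. sqi M w \<longrightarrow> rip M (P 0 w) w \<le> qn M w"
    proof (intro allI impI)
      fix w :: "'g \<Rightarrow> complex^'r^'s" assume w: "sqi M w"
      have "rip M (T w) w \<le> sqrt (qn M (T w)) * sqrt (qn M w)" by (rule rip_CS'[OF rlin_sqi[OF RT w] w])
      also have "\<dots> \<le> CT * sqrt (qn M w) * sqrt (qn M w)"
        using CT(2)[OF w] by (intro mult_right_mono) (auto simp: qn_nonneg)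
      also have "\<dots> = CT * qn M w" using qn_nonneg[of M w] by (simp add: mult.assoc)
      finally have "(1 / CT) * rip M (T w) w \<le> (1 / CT) * (CT * qn M w)"
        using CT(1) by (intro mult_left_mono) auto
      then show "rip M (P 0 w) w \<le> qn M w" using CT(1) by (simp add: ripP0)
    qed
    have C0: "\<forall>w. sqi M w \<longrightarrow> aeq M (S (P 0 w)) (P 0 (S w))"
    proof (intro allI impI)
      fix w :: "'g \<Rightarrow> complex^'r^'s" assume w: "sqi M w"
      have "aeq M (S (\<lambda>x. (1 / CT) *\<^sub>R T w x)) (\<lambda>x. (1 / CT) *\<^sub>R S (T w) x)"
        by (rule rlin_scale[OF RS rlin_sqi[OF RT w]])
      moreover have "aeq M (S (T w)) (T (S w))" by (rule aeq_sym[OF comm[OF w]])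
      ultimately show "aeq M (S (P 0 w)) (P 0 (S w))"
        unfolding aeq_def P0 by eventually_elim simp
    qed
    show ?case using R0 S0 Pos0 U0 C0 by blast
  next
    case (Suc n)
    define Q where "Q = P n"
    have RQ: "rlin M Q" and SQ: "symop M Q" and PQ: "posop M Q"
      and UQ: "\<And>w. sqi M w \<Longrightarrow> rip M (Q w) w \<le> qn M w"
      and CQ: "\<And>w. sqi M w \<Longrightarrow> aeq M (S (Q w)) (Q (S w))"
      using Suc.IH by (auto simp: Q_def)
    have PS': "P (Suc n) = (\<lambda>f x. Q f x - Q (Q f) x)" by (simp add: PSuc Q_def)
    have R1: "rlin M (P (Suc n))" unfolding PS' by (rule rlin_minus[OF RQ rlin_compose[OF RQ RQ]])
    have S1: "symop M (P (Suc n))" unfolding symop_def PS'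
    proof (intro allI impI)
      fix f g :: "'g \<Rightarrow> complex^'r^'s" assume f: "sqi M f" and g: "sqi M g"
      have Qf: "sqi M (Q f)" and Qg: "sqi M (Q g)" using rlin_sqi[OF RQ] f g by auto
      have "rip M (\<lambda>x. Q f x - Q (Q f) x) g = rip M (Q f) g - rip M (Q (Q f)) g"
        by (rule rip_diff_left[OF Qf rlin_sqi[OF RQ Qf] g])
      also have "rip M (Q f) g = rip M f (Q g)" using SQ f g by (simp add: symop_def)
      also have "rip M (Q (Q f)) g = rip M (Q f) (Q g)" using SQ Qf g by (simp add: symop_def)
      also have "rip M (Q f) (Q g) = rip M f (Q (Q g))" using SQ f Qg by (simp add: symop_def)
      also have "rip M f (Q g) - rip M f (Q (Q g)) = rip M f (\<lambda>x. Q g x - Q (Q g) x)"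
        by (rule rip_diff_right[OF Qg rlin_sqi[OF RQ Qg] f, symmetric])
      finally show "rip M (\<lambda>x. Q f x - Q (Q f) x) g = rip M f (\<lambda>x. Q g x - Q (Q g) x)" .
    qed
    have ripP1: "rip M (P (Suc n) w) w = rip M (Q w) w - qn M (Q w)" if w: "sqi M w" for w
    proof -
      have Qw: "sqi M (Q w)" by (rule rlin_sqi[OF RQ w])
      have "rip M (P (Suc n) w) w = rip M (Q w) w - rip M (Q (Q w)) w"
        unfolding PS' by (rule rip_diff_left[OF Qw rlin_sqi[OF RQ Qw] w])
      also have "rip M (Q (Q w)) w = rip M (Q w) (Q w)" using SQ Qw w by (simp add: symop_def)
      finally show ?thesis by (simp add: rip_self)
    qed
    have Pos1: "posop M (P (Suc n))" unfolding posop_def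
    proof (intro allI impI)
      fix w :: "'g \<Rightarrow> complex^'r^'s" assume w: "sqi M w"
      have "qn M (Q w) \<le> 1 * rip M (Q w) w" by (rule posq[OF RQ SQ PQ _ _ w]) (use UQ in auto)
      then show "0 \<le> rip M (P (Suc n) w) w" using ripP1[OF w] by simp
    qed
    have U1: "\<forall>w. sqi M w \<longrightarrow> rip M (P (Suc n) w) w \<le> qn M w"
    proof (intro allI impI)
      fix w :: "'g \<Rightarrow> complex^'r^'s" assume w: "sqi M w"
      show "rip M (P (Suc n) w) w \<le> qn M w"
        using ripP1[OF w] UQ[OF w] qn_nonneg[of M "Q w"] by linarith
    qed
    have C1: "\<forall>w. sqi M w \<longrightarrow> aeq M (S (P (Suc n) w)) (P (Suc n) (S w))"
    proof (intro allI impI)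
      fix w :: "'g \<Rightarrow> complex^'r^'s" assume w: "sqi M w"
      have Qw: "sqi M (Q w)" by (rule rlin_sqi[OF RQ w])
      have Sw: "sqi M (S w)" by (rule rlin_sqi[OF RS w])
      have a1: "aeq M (S (\<lambda>x. Q w x - Q (Q w) x)) (\<lambda>x. S (Q w) x - S (Q (Q w)) x)"
        by (rule rlin_diff[OF RS Qw rlin_sqi[OF RQ Qw]])
      have a2: "aeq M (S (Q w)) (Q (S w))" by (rule CQ[OF w])
      have a3: "aeq M (S (Q (Q w))) (Q (S (Q w)))" by (rule CQ[OF Qw])
      have a4: "aeq M (Q (S (Q w))) (Q (Q (S w)))"
        by (rule rlin_cong[OF RQ rlin_sqi[OF RS Qw] rlin_sqi[OF RQ Sw] a2])
      show "aeq M (S (P (Suc n) w)) (P (Suc n) (S w))"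
        using a1 a2 a3 a4 unfolding aeq_def PS' by eventually_elim simp
    qed
    show ?case using R1 S1 Pos1 U1 C1 by blast
  qed
  have RP: "rlin M (P n)" and SP: "symop M (P n)" and PP: "posop M (P n)"
    and UP: "\<And>w. sqi M w \<Longrightarrow> rip M (P n w) w \<le> qn M w"
    and CP: "\<And>w. sqi M w \<Longrightarrow> aeq M (S (P n w)) (P n (S w))" for n
    using inv[of n] by auto
  show ?thesis unfolding posop_def
  proof (intro allI impI)
    fix f :: "'g \<Rightarrow> complex^'r^'s" assume f: "sqi M f"
    have Pf: "sqi M (P n f)" for n by (rule rlin_sqi[OF RP f])
    define a where "a n = rip M (S (P n f)) f" for n
    have dec: "a (Suc n) \<le> a n" for n
    proof -
      have Qf: "sqi M (P n f)" by (rule Pf)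
      have QQf: "sqi M (P n (P n f))" by (rule rlin_sqi[OF RP Qf])
      have e1: "aeq M (S (P (Suc n) f)) (\<lambda>x. S (P n f) x - S (P n (P n f)) x)"
        unfolding PSuc by (rule rlin_diff[OF RS Qf QQf])
      have "a (Suc n) = rip M (\<lambda>x. S (P n f) x - S (P n (P n f)) x) f"
        unfolding a_def by (rule rip_aeq_left[OF rlin_sqi[OF RS Pf] sqi_diff[OF rlin_sqi[OF RS Qf] rlin_sqi[OF RS QQf]] f e1])
      also have "\<dots> = a n - rip M (S (P n (P n f))) f"
        unfolding a_def by (rule rip_diff_left[OF rlin_sqi[OF RS Qf] rlin_sqi[OF RS QQf] f])
      also have "rip M (S (P n (P n f))) f = rip M (P n (S (P n f))) f"
        by (rule rip_aeq_left[OF rlin_sqi[OF RS QQf] rlin_sqi[OF RP rlin_sqi[OF RS Qf]] f CP[OF Qf]])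
      also have "\<dots> = rip M (S (P n f)) (P n f)" using SP rlin_sqi[OF RS Qf] f by (simp add: symop_def)
      finally show ?thesis using PS Qf by (simp add: posop_def)
    qed
    have a0: "a n \<le> a 0" for n
    proof (induction n)
      case (Suc n) then show ?case using dec[of n] by linarith
    qed simp
    have tel: "(\<Sum>k<n. qn M (P k f)) = rip M (P 0 f) f - rip M (P n f) f" for n
    proof (induction n)
      case (Suc n)
      have "rip M (P (Suc n) f) f = rip M (P n f) f - qn M (P n f)"
      proof -
        have "rip M (P (Suc n) f) f = rip M (P n f) f - rip M (P n (P n f)) f"
          unfolding PSuc by (rule rip_diff_left[OF Pf rlin_sqi[OF RP Pf] f])
        also have "rip M (P n (P n f)) f = rip M (P n f) (P n f)" using SP Pf f by (simp add: symop_def)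
        finally show ?thesis by (simp add: rip_self)
      qed
      then show ?case using Suc.IH by simp
    qed simp
    have sumb: "(\<Sum>k<n. qn M (P k f)) \<le> qn M f" for n
    proof -
      have "0 \<le> rip M (P n f) f" using PP[of n] f unfolding posop_def by blast
      then show ?thesis using tel[of n] UP[OF f, of 0] by linarith
    qed
    have small: "\<exists>n. sqrt (qn M (P n f)) < d" if d: "d > 0" for d
    proof (rule ccontr)
      assume "\<not> (\<exists>n. sqrt (qn M (P n f)) < d)"
      then have "d \<le> sqrt (qn M (P n f))" for n by (simp add: not_less)
      then have sq: "d\<^sup>2 \<le> (sqrt (qn M (P n f)))\<^sup>2" for n using d by (intro power_mono) auto
      have ge: "d\<^sup>2 \<le> qn M (P n f)" for n using sq[of n] qn_nonneg[of M "P n f"] by simp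
      obtain n :: nat where n: "qn M f / d\<^sup>2 < real n" using reals_Archimedean2 by blast
      have "real n * d\<^sup>2 = (\<Sum>k<n. d\<^sup>2)" by simp
      also have "\<dots> \<le> (\<Sum>k<n. qn M (P k f))" by (rule sum_mono) (rule ge)
      also have "\<dots> \<le> qn M f" by (rule sumb)
      finally have "real n * d\<^sup>2 \<le> qn M f" .
      moreover have "qn M f < real n * d\<^sup>2" using n d by (simp add: divide_less_eq)
      ultimately show False by simp
    qed
    define K where "K = CS * sqrt (qn M f)"
    have K: "K \<ge> 0" using CS(1) by (simp add: K_def qn_nonneg)
    have lower: "- (K * sqrt (qn M (P n f))) \<le> a n" for n
    proof -
      have "- a n \<le> \<bar>a n\<bar>" by simp
      also have "\<bar>a n\<bar> \<le> sqrt (qn M (S (P n f))) * sqrt (qn M f)"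
        unfolding a_def by (rule rip_CS[OF rlin_sqi[OF RS Pf] f])
      also have "\<dots> \<le> CS * sqrt (qn M (P n f)) * sqrt (qn M f)"
        using CS(2)[OF Pf] by (intro mult_right_mono) (auto simp: qn_nonneg)
      also have "\<dots> = K * sqrt (qn M (P n f))" by (simp add: K_def)
      finally show ?thesis by simp
    qed
    have "a 0 \<ge> 0"
    proof (rule ccontr)
      assume neg: "\<not> a 0 \<ge> 0"
      define d where "d = - a 0 / (2 * (K + 1))"
      have d: "d > 0" using neg K by (simp add: d_def divide_neg_pos)
      obtain n where n: "sqrt (qn M (P n f)) < d" using small[OF d] by blast
      have "K * sqrt (qn M (P n f)) \<le> K * d" using n K by (intro mult_left_mono) auto
      also have "\<dots> \<le> (K + 1) * d" using d by simp
      also have "\<dots> = - a 0 / 2" using K by (simp add: d_def field_simps)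
      finally have "- (- a 0 / 2) \<le> a n" using lower[of n] by linarith
      then have "- (- a 0 / 2) \<le> a 0" using a0[of n] by linarith
      then show False using neg by simp
    qed
    then have "rip M (S (P 0 f)) f \<ge> 0" by (simp add: a_def)
    moreover have "rip M (S (P 0 f)) f = (1 / CT) * rip M (S (T f)) f"
    proof -
      have "aeq M (S (P 0 f)) (\<lambda>x. (1 / CT) *\<^sub>R S (T f) x)"
        unfolding P0 by (rule rlin_scale[OF RS rlin_sqi[OF RT f]])
      then have "rip M (S (P 0 f)) f = rip M (\<lambda>x. (1 / CT) *\<^sub>R S (T f) x) f"
        by (rule rip_aeq_left[OF rlin_sqi[OF RS Pf] sqi_scaleR[OF rlin_sqi[OF RS rlin_sqi[OF RT f]]] f])
      then show ?thesis by (simp add: rip_scale_left)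
    qed
    ultimately have "rip M (S (T f)) f \<ge> 0" using CT(1) by (simp add: zero_le_divide_iff)
    moreover have "rip M (T (S f)) f = rip M (S (T f)) f"
      by (rule rip_aeq_left[OF rlin_sqi[OF RT rlin_sqi[OF RS f]] rlin_sqi[OF RS rlin_sqi[OF RT f]] f comm[OF f]])
    ultimately show "0 \<le> rip M (T (S f)) f" by simp
  qed
qed



theorem theorem3p1:
  fixes M :: "'g::{ab_group_add, metric_space} measure"
    and T S :: "('g \<Rightarrow> complex^'r^'s) \<Rightarrow> ('g \<Rightarrow> complex^'r^'s)"
    and E :: "nat \<Rightarrow> 'g \<Rightarrow> complex^'r^'s"
  assumes G: "lca_group TYPE('g)"
    and haar: "haar_measure M"
    and T: "bounded_linear_op M T" "positive_op M T" "adjointable M T"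
    and S: "bounded_linear_op M S" "positive_op M S" "adjointable M S"
    and E: "mv_onb M E"
  shows "mv_riesz_basis M (\<lambda>k x. E k x + T (E k) x)
       \<and> mv_riesz_basis M (\<lambda>k x. E k x + S (E k) x)
       \<and> mv_riesz_basis M (\<lambda>k x. E k x + T (E k) x + S (E k) x)
       \<and> ((\<forall>f \<in> L2 M. aeq M (T (S f)) (S (T f)))
            \<longrightarrow> mv_riesz_basis M (\<lambda>k x. E k x + T (S (E k)) x))"
proof -
  have RT: "rlin M T" and RS: "rlin M S" using blo_rlin T(1) S(1) by auto
  have symT: "symop M T" and posT: "posop M T" using positive_symop positive_posop T(1,2) by auto
  have symS: "symop M S" and posS: "posop M S" using positive_symop positive_posop S(1,2) by auto
  have 1: "mv_riesz_basis M (\<lambda>k x. E k x + T (E k) x)" by (rule riesz_of[OF E T(1) symT posT T(3)])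
  have 2: "mv_riesz_basis M (\<lambda>k x. E k x + S (E k) x)" by (rule riesz_of[OF E S(1) symS posS S(3)])
  have "mv_riesz_basis M (\<lambda>k x. E k x + (T (E k) x + S (E k) x))"
    by (rule riesz_of[OF E blo_sum[OF T(1) S(1)] symop_sum[OF RT RS symT symS] posop_sum[OF RT RS posT posS]
          adjointable_sum[OF T(3) rlin_sqi[OF RT] S(3) rlin_sqi[OF RS]]])
  then have 3: "mv_riesz_basis M (\<lambda>k x. E k x + T (E k) x + S (E k) x)" by (simp add: add.assoc)
  have 4: "mv_riesz_basis M (\<lambda>k x. E k x + T (S (E k)) x)" if comm: "\<forall>f \<in> L2 M. aeq M (T (S f)) (S (T f))"
  proof -
    have comm': "\<And>f. sqi M f \<Longrightarrow> aeq M (T (S f)) (S (T f))" using comm by (simp add: L2_sqi)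
    have SL: "\<And>f. f \<in> L2 M \<Longrightarrow> S f \<in> L2 M" using S(1) by (simp add: bounded_linear_op_def)
    show ?thesis
      by (rule riesz_of[OF E blo_comp[OF T(1) S(1)] symop_comp[OF RT RS symT symS comm']
            posop_comp[OF RT RS symT symS posT posS comm'] adjointable_comp[OF T(3) S(3) SL]])
  qed
  show ?thesis using 1 2 3 4 by blast
qed


end
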